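(* Let $S=\Gamma\backslash\mathbb H$ be a hyperbolic surface with at least one cusp, let $u\in T^1S$ be cusp-recurrent and let $\tilde u\in T^1\mathbb H$ be a lift of $u$. Then there exists a sequence of pairs $(\tilde H_n,p_n)_{n\in\mathbb N}$, where $p_n\in\Gamma$ is parabolic with fixed point $x_n\in\partial\mathbb H$ and $\tilde H_n$ is a horocycle centered at $x_n$ (hence preserved by $p_n$), such that: (1) $\tilde u$ is tangent to the oriented pair $(\tilde H_n,p_n)$ for every $n$; (2) the tangency point is $\tilde u(t_n)$, where $(t_n)$ is an increasing sequence of nonnegative numbers tending to $+\infty$; (3) the points $x_n$ are pairwise distinct and form a monotonic sequence converging to $\tilde u(+\infty)$ (monotonic in the sense of boundary coordinates after normalizing $\tilde u(+\infty)=\infty$); (4) the horoballs bounded by the $\tilde H_n$ are pairwise disjoint; (5) $\ell(\tilde H_n,p_n)\to 0$.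
   Context: $\mathbb H$ is the upper half-plane, $\partial\mathbb H=\mathbb R\cup\{\infty\}$. For $v\in T^1\mathbb H$, $t\mapsto v(t)$ is the unit-speed geodesic with initial vector $v$, $v(+\infty)$ its forward endpoint. $\Gamma$ is a torsion-free Fuchsian group, $S=\Gamma\backslash\mathbb H$. A closed horocycle in $S$ is the projection of a horocycle centered at the fixed point of a parabolic element of $\Gamma$. $u\in T^1S$ is cusp-recurrent if for a lift $\tilde u$, $\tilde u(+\infty)$ is not fixed by a parabolic element of $\Gamma$ (the ray does not escape through a cusp) and there are closed horocycles $H_n$ in $S$ with lengths $\to0$ and times $t_n\ge0$ with $u(t_n)\in H_n$. For a horocycle $\tilde H$ and a parabolic $p$ preserving it: $\ell(\tilde H,p)$ is the horocyclic arc length between $x$ and $px$, $x\in\tilde H$; positive orientation is given by an arc-length parametrization with $p\tilde H(s)=\tilde H(s+\ell(\tilde H,p))$; $\tilde u$ is tangent to the oriented pair $(\tilde H,p)$ if $\tilde u(\mathbb R^+)$ is tangent to $\tilde H$ at $\tilde u(t_0)=\tilde H(s_0)$, $t_0\ge0$, with $\frac{d\tilde u}{dt}(t_0)=\frac{d\tilde H}{ds}(s_0)$ for a positively oriented parametrization. *)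

theory Defs
  imports "HOL-Analysis.Analysis"
begin

type_synonym mat2 = "real^2^2"

text \<open>Boundary of H: Some x is the real point x, None is the point infinity.\<close>
type_synonym bdpt = "real option"

definition mob :: "mat2 \<Rightarrow> complex \<Rightarrow> complex" where
  "mob M z = (of_real (M$1$1) * z + of_real (M$1$2)) / (of_real (M$2$1) * z + of_real (M$2$2))"

fun bd_act :: "mat2 \<Rightarrow> bdpt \<Rightarrow> bdpt" where
  "bd_act M None = (if M$2$1 = 0 then None else Some (M$1$1 / M$2$1))"
| "bd_act M (Some x) = (if M$2$1 * x + M$2$2 = 0 then None
                        else Some ((M$1$1 * x + M$1$2) / (M$2$1 * x + M$2$2)))"

definition mtrace :: "mat2 \<Rightarrow> real" where
  "mtrace M = M$1$1 + M$2$2"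

definition mpow :: "mat2 \<Rightarrow> nat \<Rightarrow> mat2" where
  "mpow M n = (((**) M) ^^ n) (mat 1)"

text \<open>A Fuchsian group, represented by its (full) preimage in SL(2,R):
  a subgroup of SL(2,R) containing -I, which is discrete.\<close>
definition fuchsian :: "mat2 set \<Rightarrow> bool" where
  "fuchsian G \<longleftrightarrow>
     (\<forall>M\<in>G. det M = 1) \<and> mat 1 \<in> G \<and> - mat 1 \<in> G \<and>
     (\<forall>M\<in>G. \<forall>N\<in>G. M ** N \<in> G) \<and> (\<forall>M\<in>G. matrix_inv M \<in> G) \<and>
     (\<exists>e>0. \<forall>M\<in>G. norm (M - mat 1) < e \<longrightarrow> M = mat 1)"

definition torsion_free :: "mat2 set \<Rightarrow> bool" where
  "torsion_free G \<longleftrightarrow>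
     (\<forall>M\<in>G. \<forall>n>0. (mpow M n = mat 1 \<or> mpow M n = - mat 1) \<longrightarrow> (M = mat 1 \<or> M = - mat 1))"

definition parabolic :: "mat2 \<Rightarrow> bool" where
  "parabolic M \<longleftrightarrow> M \<noteq> mat 1 \<and> M \<noteq> - mat 1 \<and> \<bar>mtrace M\<bar> = 2"

definition parabolic_fixed_point :: "mat2 set \<Rightarrow> bdpt \<Rightarrow> bool" where
  "parabolic_fixed_point G \<xi> \<longleftrightarrow> (\<exists>p\<in>G. parabolic p \<and> bd_act p \<xi> = \<xi>)"

definition hdist :: "complex \<Rightarrow> complex \<Rightarrow> real" where
  "hdist z w = arcosh (1 + (cmod (z - w))\<^sup>2 / (2 * Im z * Im w))"

text \<open>Unit tangent vectors of H: base point z in H and vector v with hyperbolic norm 1.\<close>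
definition T1H :: "(complex \<times> complex) set" where
  "T1H = {(z, v). Im z > 0 \<and> cmod v = Im z}"

definition geod :: "complex \<times> complex \<Rightarrow> real \<Rightarrow> complex" where
  "geod u = (THE \<gamma>. \<gamma> 0 = fst u \<and> (\<gamma> has_vector_derivative snd u) (at 0) \<and>
                     (\<forall>s. Im (\<gamma> s) > 0) \<and> (\<forall>s t. hdist (\<gamma> s) (\<gamma> t) = \<bar>s - t\<bar>))"

definition tends_to_bd :: "(real \<Rightarrow> complex) \<Rightarrow> bdpt \<Rightarrow> bool" where
  "tends_to_bd \<gamma> \<xi> = (case \<xi> of
      None \<Rightarrow> filterlim (\<lambda>t. cmod (\<gamma> t)) at_top at_top
    | Some x \<Rightarrow> (\<gamma> \<longlongrightarrow> complex_of_real x) at_top)"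

definition fwd_end :: "complex \<times> complex \<Rightarrow> bdpt" where
  "fwd_end u = (THE \<xi>. tends_to_bd (geod u) \<xi>)"

text \<open>Horocycle centered at xi with (Euclidean) size parameter r > 0:
  circle of radius r tangent to R at x, or horizontal line Im z = r.\<close>
fun horocycle :: "bdpt \<Rightarrow> real \<Rightarrow> complex set" where
  "horocycle None r = {z. Im z = r}"
| "horocycle (Some x) r = {z. Im z > 0 \<and> cmod (z - Complex x r) = r}"

fun horoball :: "bdpt \<Rightarrow> real \<Rightarrow> complex set" where
  "horoball None r = {z. Im z > r}"
| "horoball (Some x) r = {z. cmod (z - Complex x r) < r}"

text \<open>H is a (hyperbolic) arc-length parametrization of the curve C.\<close>
definition arclen_param :: "(real \<Rightarrow> complex) \<Rightarrow> complex set \<Rightarrow> bool" where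
  "arclen_param H C \<longleftrightarrow> bij_betw H UNIV C \<and>
     (\<forall>s. \<exists>v. (H has_vector_derivative v) (at s) \<and> cmod v = Im (H s))"

text \<open>Length of the closed horocycle in S obtained by projecting the horocycle
  horocycle xi r (xi a parabolic fixed point): the smallest positive
  horocyclic translation length of an element of G fixing xi.\<close>
definition closed_horo_length :: "mat2 set \<Rightarrow> bdpt \<Rightarrow> real \<Rightarrow> real" where
  "closed_horo_length G \<xi> r = Inf {l. l > 0 \<and> (\<exists>p\<in>G. parabolic p \<and> bd_act p \<xi> = \<xi> \<and>
       (\<exists>H. arclen_param H (horocycle \<xi> r) \<and> (\<forall>s. mob p (H s) = H (s + l))))}"

text \<open>Cusp-recurrence of u in T^1 S, expressed through a lift u' in T^1 H.\<close>
definition cusp_recurrent :: "mat2 set \<Rightarrow> complex \<times> complex \<Rightarrow> bool" where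
  "cusp_recurrent G u \<longleftrightarrow>
     \<not> parabolic_fixed_point G (fwd_end u) \<and>
     (\<exists>\<xi> r t. (\<forall>n. t n \<ge> 0 \<and> parabolic_fixed_point G (\<xi> n) \<and> r n > 0 \<and>
                    geod u (t n) \<in> horocycle (\<xi> n) (r n)) \<and>
              (\<lambda>n. closed_horo_length G (\<xi> n) (r n)) \<longlonglongrightarrow> 0)"

end

theory Submission
  imports Defs
begin

definition mk :: "real \<Rightarrow> real \<Rightarrow> real \<Rightarrow> real \<Rightarrow> mat2" where
  "mk a b c d = vector [vector [a,b], vector [c,d]]"

lemma mk_ent[simp]: "mk a b c d $1$1 = a" "mk a b c d $1$2 = b" "mk a b c d $2$1 = c" "mk a b c d $2$2 = d"
  by (simp_all add: mk_def vector_def)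

lemma one_ne_two2[simp]: "(1::2) \<noteq> 2" "(2::2) \<noteq> 1" by simp_all

lemma mat2_eq: "(M::mat2) = N \<longleftrightarrow> M$1$1 = N$1$1 \<and> M$1$2 = N$1$2 \<and> M$2$1 = N$2$1 \<and> M$2$2 = N$2$2"
  by (auto simp: vec_eq_iff forall_2)

lemma mat2_mk: "(M::mat2) = mk (M$1$1) (M$1$2) (M$2$1) (M$2$2)"
  by (simp add: mat2_eq)

lemma mult_ent[simp]:
  "((A::mat2) ** B)$1$1 = A$1$1 * B$1$1 + A$1$2 * B$2$1"
  "(A ** B)$1$2 = A$1$1 * B$1$2 + A$1$2 * B$2$2"
  "(A ** B)$2$1 = A$2$1 * B$1$1 + A$2$2 * B$2$1"
  "(A ** B)$2$2 = A$2$1 * B$1$2 + A$2$2 * B$2$2"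
  by (simp_all add: matrix_matrix_mult_def sum_2)

lemma mat1_ent[simp]: "(mat 1::mat2)$1$1 = 1" "(mat 1::mat2)$1$2 = 0" "(mat 1::mat2)$2$1 = 0" "(mat 1::mat2)$2$2 = 1"
  by (simp_all add: mat_def)

lemma det2: "det (M::mat2) = M$1$1 * M$2$2 - M$1$2 * M$2$1"
  by (simp add: det_2)

definition inv2 :: "mat2 \<Rightarrow> mat2" where "inv2 M = mk (M$2$2) (-M$1$2) (-M$2$1) (M$1$1)"

lemma inv2_ent[simp]: "inv2 M$1$1 = M$2$2" "inv2 M$1$2 = -M$1$2" "inv2 M$2$1 = -M$2$1" "inv2 M$2$2 = M$1$1"
  by (simp_all add: inv2_def)

lemma inv2_r: "det M = 1 \<Longrightarrow> M ** inv2 M = mat 1"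
  by (simp add: mat2_eq det2 algebra_simps)
lemma inv2_l: "det M = 1 \<Longrightarrow> inv2 M ** M = mat 1"
  by (simp add: mat2_eq det2 algebra_simps)
lemma det_inv2[simp]: "det (inv2 M) = det M" by (simp add: det2)
lemma inv2_inv2[simp]: "inv2 (inv2 M) = M" by (simp add: mat2_eq)
lemma inv2_mult: "inv2 (A ** B) = inv2 B ** inv2 A" by (simp add: mat2_eq algebra_simps)
lemma det_mult2: "det ((A::mat2) ** B) = det A * det B" by (simp add: det_mul)

lemma matrix_inv_eq: assumes "det M = 1" shows "matrix_inv M = inv2 M"
proof -
  have ex: "\<exists>A'. M ** A' = mat 1 \<and> A' ** M = mat 1" using inv2_r[OF assms] inv2_l[OF assms] by blast
  define A where "A = matrix_inv M"
  have A: "M ** A = mat 1 \<and> A ** M = mat 1" unfolding A_def matrix_inv_def using someI_ex[OF ex] by simp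
  have "A = A ** (M ** inv2 M)" using inv2_r[OF assms] by (simp add: matrix_mul_rid)
  also have "\<dots> = (A ** M) ** inv2 M" by (simp add: matrix_mul_assoc)
  also have "\<dots> = inv2 M" using A by (simp add: matrix_mul_lid)
  finally show ?thesis unfolding A_def .
qed

lemma neg_ent[simp]: "(-(M::mat2))$i$j = - (M$i$j)" by simp

lemma mtrace_comm: "mtrace (A ** B) = mtrace (B ** A)" by (simp add: mtrace_def algebra_simps)

definition den :: "mat2 \<Rightarrow> complex \<Rightarrow> complex" where
  "den M z = of_real (M$2$1) * z + of_real (M$2$2)"

lemma den_nz: assumes "det M \<noteq> 0" "Im z > 0" shows "den M z \<noteq> 0"
proof
  assume h: "den M z = 0"
  hence "M$2$1 * Im z = 0" "M$2$1 * Re z + M$2$2 = 0" unfolding den_def by (auto simp: complex_eq_iff)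
  hence "M$2$1 = 0" "M$2$2 = 0" using assms(2) by auto
  thus False using assms(1) by (simp add: det2)
qed

lemma mob_den: "mob M z = (of_real (M$1$1) * z + of_real (M$1$2)) / den M z"
  by (simp add: mob_def den_def)

lemma den_Complex: "den M z = Complex (M$2$1 * Re z + M$2$2) (M$2$1 * Im z)"
  by (simp add: den_def complex_eq_iff)
lemma num_Complex: "of_real (M$1$1) * z + of_real (M$1$2) = Complex (M$1$1 * Re z + M$1$2) (M$1$1 * Im z)"
  by (simp add: complex_eq_iff)

lemma Im_mob: assumes "Im z > 0" "det M \<noteq> 0"
  shows "Im (mob M z) = det M * Im z / (cmod (den M z))\<^sup>2"
proof -
  have e: "M$1$1 * Im z * (M$2$1 * Re z + M$2$2) - (M$1$1 * Re z + M$1$2) * (M$2$1 * Im z) = det M * Im z"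
    by (simp add: det2 algebra_simps)
  show ?thesis unfolding mob_den den_Complex num_Complex cmod_power2 Im_divide
    by (simp only: complex.sel e)
qed

lemma Im_mob_pos: assumes "Im z > 0" "det M = 1" shows "Im (mob M z) > 0"
  using Im_mob[OF assms(1)] assms den_nz[of M z] by simp

lemma frac_comp: fixes a b c d p q :: complex
  assumes "q \<noteq> 0" "c*p + d*q \<noteq> 0"
  shows "(a*(p/q)+b)/(c*(p/q)+d) = (a*p + b*q)/(c*p + d*q)"
proof -
  have "a*(p/q)+b = (a*p+b*q)/q" "c*(p/q)+d = (c*p+d*q)/q" using assms by (simp_all add: field_simps)
  thus ?thesis using assms by simp
qed

lemma mob_mult: assumes "det A \<noteq> 0" "det B \<noteq> 0" "Im z > 0"
  shows "mob (A ** B) z = mob A (mob B z)"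
proof -
  have d1: "den B z \<noteq> 0" using den_nz assms by auto
  have d2: "den (A ** B) z \<noteq> 0" using den_nz assms by (auto simp: det_mult2)
  let ?p = "of_real (B$1$1) * z + of_real (B$1$2)"
  have "of_real (A$2$1) * ?p + of_real (A$2$2) * den B z = den (A ** B) z"
    unfolding den_def by (simp add: algebra_simps)
  hence d3: "of_real (A$2$1) * ?p + of_real (A$2$2) * den B z \<noteq> 0" using d2 by simp
  have "mob A (mob B z) = (of_real (A$1$1) * ?p + of_real (A$1$2) * den B z) / (of_real (A$2$1) * ?p + of_real (A$2$2) * den B z)"
    unfolding mob_den[of B] unfolding mob_def using frac_comp[OF d1 d3] by simp
  also have "\<dots> = mob (A ** B) z" unfolding mob_def den_def by (simp add: algebra_simps)
  finally show ?thesis by simp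
qed

lemma mob_mat1[simp]: "mob (mat 1) z = z" by (simp add: mob_def)

lemma mob_neg[simp]: "mob (-M) z = mob M z"
proof -
  have "mob (-M) z = (-(of_real (M$1$1) * z + of_real (M$1$2))) / (-(of_real (M$2$1) * z + of_real (M$2$2)))"
    by (simp add: mob_def algebra_simps)
  also have "\<dots> = mob M z" unfolding mob_def by (rule minus_divide_divide)
  finally show ?thesis .
qed

lemma mob_inv2_l: "det M = 1 \<Longrightarrow> Im z > 0 \<Longrightarrow> mob (inv2 M) (mob M z) = z"
  using mob_mult[of "inv2 M" M z] by (simp add: inv2_l)
lemma mob_inv2_r: "det M = 1 \<Longrightarrow> Im z > 0 \<Longrightarrow> mob M (mob (inv2 M) z) = z"
  using mob_mult[of M "inv2 M" z] by (simp add: inv2_r)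

lemma mob_deriv: assumes "det M = 1" "den M z \<noteq> 0"
  shows "(mob M has_field_derivative 1 / (den M z)\<^sup>2) (at z)"
proof -
  let ?a = "of_real (M$1$1) :: complex" and ?b = "of_real (M$1$2) :: complex"
  let ?c = "of_real (M$2$1) :: complex" and ?d = "of_real (M$2$2) :: complex"
  have e: "?a * ?d - ?b * ?c = 1"
    using assms(1) unfolding det2 by (metis of_real_1 of_real_mult of_real_diff)
  have dz: "?c * z + ?d \<noteq> 0" using assms(2) unfolding den_def .
  have "((\<lambda>z. (?a * z + ?b) / (?c * z + ?d)) has_field_derivative
     ((?a * (?c * z + ?d) - (?a * z + ?b) * ?c) / ((?c * z + ?d) * (?c * z + ?d)))) (at z)"
    using dz by (auto intro!: derivative_eq_intros)
  moreover have "?a * (?c * z + ?d) - (?a * z + ?b) * ?c = ?a * ?d - ?b * ?c" by algebra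
  ultimately show ?thesis unfolding mob_def[abs_def] den_def using e by (simp add: power2_eq_square)
qed

lemma frac_diff: fixes a b c d z w :: complex
  assumes "a*d - b*c = 1" "c*z+d \<noteq> 0" "c*w+d \<noteq> 0"
  shows "(a*z+b)/(c*z+d) - (a*w+b)/(c*w+d) = (z-w)/((c*z+d)*(c*w+d))"
proof -
  have "(a*z+b)*(c*w+d) - (a*w+b)*(c*z+d) = (a*d-b*c)*(z-w)" by algebra
  hence "(a*z+b)*(c*w+d) - (a*w+b)*(c*z+d) = z - w" using assms(1) by simp
  thus ?thesis using assms(2,3) by (simp add: divide_simps)
qed

lemma mob_diff: assumes "det M = 1" "den M z \<noteq> 0" "den M w \<noteq> 0"
  shows "mob M z - mob M w = (z - w) / (den M z * den M w)"
proof -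
  have e: "of_real (M$1$1) * of_real (M$2$2) - of_real (M$1$2) * of_real (M$2$1) = (1::complex)"
    using assms(1) unfolding det2 by (metis of_real_1 of_real_mult of_real_diff)
  show ?thesis using frac_diff[OF e, of z w] assms(2,3) unfolding mob_def den_def by simp
qed

lemma hdist_mob: assumes "det M = 1" "Im z > 0" "Im w > 0"
  shows "hdist (mob M z) (mob M w) = hdist z w"
proof -
  have dz: "den M z \<noteq> 0" and dw: "den M w \<noteq> 0" using den_nz assms by auto
  define A where "A = cmod (den M z)" 
  define B where "B = cmod (den M w)" 
  have A: "A > 0" "B > 0" using dz dw by (auto simp: A_def B_def)
  have 1: "(cmod (mob M z - mob M w))\<^sup>2 = (cmod (z - w))\<^sup>2 / (A*B)\<^sup>2"
    unfolding mob_diff[OF assms(1) dz dw] A_def B_def by (simp add: norm_divide norm_mult power_divide)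
  have 2: "Im (mob M z) = Im z / A\<^sup>2" "Im (mob M w) = Im w / B\<^sup>2"
    using Im_mob assms unfolding A_def B_def by auto
  have "(cmod (mob M z - mob M w))\<^sup>2 / (2 * Im (mob M z) * Im (mob M w)) =
        (cmod (z - w))\<^sup>2 / (2 * Im z * Im w)"
    unfolding 1 2 using A by (simp add: field_simps power2_eq_square)
  thus ?thesis unfolding hdist_def by simp
qed

lemma det1_col: fixes M :: mat2 assumes "det M = 1" shows "\<not> (M$2$1 * x + M$2$2 = 0 \<and> M$1$1 * x + M$1$2 = 0)"
proof
  assume h: "M$2$1 * x + M$2$2 = 0 \<and> M$1$1 * x + M$1$2 = 0"
  hence "M$2$2 = - M$2$1 * x" "M$1$2 = - M$1$1 * x" by auto
  thus False using assms by (simp add: det2 algebra_simps)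
qed

lemma frac_comp_r: fixes a b c d p q :: real assumes "q \<noteq> 0"
  shows "(a*p/q+b)/(c*p/q+d) = (a*p + b*q)/(c*p + d*q)"
proof -
  have "a*p/q+b = (a*p+b*q)/q" "c*p/q+d = (c*p+d*q)/q" using assms by (simp_all add: field_simps)
  thus ?thesis using assms by simp
qed
lemma frac_comp_r2: fixes c d p q :: real assumes "q \<noteq> 0"
  shows "(c*p/q+d = 0) = (c*p + d*q = 0)"
proof -
  have "c*p/q+d = (c*p+d*q)/q" using assms by (simp_all add: field_simps)
  thus ?thesis using assms by simp
qed

lemma bd_act_mult: assumes A: "det A = 1" and B: "det B = 1"
  shows "bd_act (A ** B) \<xi> = bd_act A (bd_act B \<xi>)"
proof (cases \<xi>)
  case None
  show ?thesis
  proof (cases "B$2$1 = 0")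
    case True
    hence "B$1$1 \<noteq> 0" using B by (auto simp: det2)
    thus ?thesis using True None by (simp add: field_simps)
  next
    case False
    show ?thesis using False None frac_comp_r[OF False, where a="A$1$1" and b="A$1$2" and c="A$2$1" and d="A$2$2" and p="B$1$1"] frac_comp_r2[OF False, where c="A$2$1" and d="A$2$2" and p="B$1$1"] by simp
  qed
next
  case (Some x)
  define p where "p = B$1$1 * x + B$1$2"
  define q where "q = B$2$1 * x + B$2$2"
  have eq1: "(A ** B)$2$1 * x + (A ** B)$2$2 = A$2$1 * p + A$2$2 * q" unfolding p_def q_def by (simp add: algebra_simps)
  have eq2: "(A ** B)$1$1 * x + (A ** B)$1$2 = A$1$1 * p + A$1$2 * q" unfolding p_def q_def by (simp add: algebra_simps)
  show ?thesis
  proof (cases "q = 0")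
    case True
    hence "p \<noteq> 0" using det1_col[OF B, of x] unfolding p_def q_def by auto
    hence p0: "p \<noteq> 0" .
    have 1: "bd_act B \<xi> = None" using True Some by (simp add: q_def)
    have 2: "bd_act (A ** B) \<xi> = (if A$2$1 * p = 0 then None else Some ((A$1$1 * p) / (A$2$1 * p)))"
      using Some by (simp only: bd_act.simps eq1 eq2 True) simp
    show ?thesis unfolding 1 2 using p0 by simp
  next
    case False
    have 1: "bd_act B \<xi> = Some (p/q)" using False Some unfolding p_def q_def by simp
    have 2: "bd_act (A ** B) \<xi> = (if A$2$1 * p + A$2$2 * q = 0 then None else Some ((A$1$1 * p + A$1$2 * q) / (A$2$1 * p + A$2$2 * q)))"
      using Some by (simp only: bd_act.simps eq1 eq2)
    show ?thesis unfolding 1 2 using frac_comp_r[OF False, where a="A$1$1" and b="A$1$2" and c="A$2$1" and d="A$2$2" and p=p] frac_comp_r2[OF False, where c="A$2$1" and d="A$2$2" and p=p]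
      by simp
  qed
qed


lemma bd_act_mat1[simp]: "bd_act (mat 1) \<xi> = \<xi>" by (cases \<xi>) auto

lemma neg_frac: "(- p - q) / (- r - s) = ((p + q)/(r + s) :: real)"
  using minus_divide_divide[of "p+q" "r+s"] by simp
lemma bd_act_neg[simp]: "bd_act (-M) \<xi> = bd_act M \<xi>"
proof (cases \<xi>)
  case None thus ?thesis by simp
next
  case (Some x)
  have 1: "- M $ 2 $ 1 * x + - M $ 2 $ 2 = -(M $ 2 $ 1 * x + M $ 2 $ 2)" by simp
  have 2: "(- M $ 1 $ 1 * x + - M $ 1 $ 2) = -(M $ 1 $ 1 * x + M $ 1 $ 2)" by simp
  show ?thesis using Some by (simp add: neg_frac)
qed
lemma bd_act_inv_l: "det M = 1 \<Longrightarrow> bd_act (inv2 M) (bd_act M \<xi>) = \<xi>"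
  using bd_act_mult[of "inv2 M" M \<xi>] by (simp add: inv2_l)
lemma bd_act_inv_r: "det M = 1 \<Longrightarrow> bd_act M (bd_act (inv2 M) \<xi>) = \<xi>"
  using bd_act_mult[of M "inv2 M" \<xi>] by (simp add: inv2_r)

definition mkq :: "real \<Rightarrow> real \<Rightarrow> real \<Rightarrow> mat2" where
  "mkq e k y = mk (e*(1 - k*y)) (e*k*y^2) (-e*k) (e*(1 + k*y))"

lemma parabolic_form:
  assumes d: "det q = 1" and p: "parabolic q" and f: "bd_act q (Some y) = Some y"
  shows "\<exists>e k. (e = 1 \<or> e = -1) \<and> k \<noteq> 0 \<and> q = mkq e k y"
proof -
  obtain a b c d' where q: "q = mk a b c d'" by (metis mat2_mk)
  have det: "a*d' - b*c = 1" using d q by (simp add: det2)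
  have tr0: "\<bar>a + d'\<bar> = 2" using p q unfolding parabolic_def mtrace_def by simp
  define e where "e = (a + d')/2"
  have e: "e = 1 \<or> e = -1" using tr0 unfolding e_def by (auto simp: abs_if split: if_splits)
  have tr: "a + d' = 2*e" unfolding e_def by simp
  have e2: "e*e = 1" using e by auto
  have cy: "c*y + d' \<noteq> 0" and fx: "(a*y+b)/(c*y+d') = y" using f q by (auto split: if_splits)
  hence b: "b = c*y^2 + (d' - a)*y" by (simp add: field_simps power2_eq_square)
  have "(a - e - c*y)^2 = 0"
  proof -
    have "(a - e - c*y)^2 = (a*a - 2*e*a + e*e) - 2*c*y*(a-e) + c^2*y^2" by (simp add: power2_eq_square algebra_simps)
    also have "\<dots> = 0" using det tr e2 b unfolding power2_eq_square by algebra
    finally show ?thesis .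
  qed
  hence a: "a = e + c*y" by simp
  have d'': "d' = e - c*y" using tr a by simp
  have bb: "b = - c*y^2" using b a d'' by (simp add: power2_eq_square algebra_simps)
  have c0: "c \<noteq> 0"
  proof
    assume "c = 0"
    hence "q = mk e 0 0 e" using q a d'' bb by simp
    hence "q = mat 1 \<or> q = - mat 1" using e by (auto simp: mat2_eq)
    thus False using p unfolding parabolic_def by auto
  qed
  show ?thesis
    apply (rule exI[of _ e], rule exI[of _ "-e*c"])
    using e c0 q a d'' bb e2 by (auto simp: mkq_def mat2_eq algebra_simps)
qed


definition Ay :: "real \<Rightarrow> mat2" where "Ay y = mk y (-1) 1 0"

lemma det_mkq: "e*e = 1 \<Longrightarrow> det (mkq e k y) = 1"
  unfolding mkq_def det2 mk_ent by (simp add: power2_eq_square algebra_simps)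
lemma conj_mkq: "inv2 (Ay x) ** mkq e k y ** Ay x = mk (e*(1 - k*(x-y))) (e*k) (-e*k*(x-y)^2) (e*(1 + k*(x-y)))"
  unfolding mat2_eq mult_ent inv2_ent Ay_def mkq_def mk_ent by (simp add: power2_eq_square algebra_simps)
lemma det_Ay[simp]: "det (Ay y) = 1" by (simp add: Ay_def det2)

lemma bd_act_Ay_None: "bd_act (Ay y) None = Some y" by (simp add: Ay_def)
lemma bd_act_Ayi: "bd_act (inv2 (Ay y)) (Some y) = None"
  using bd_act_inv_l[of "Ay y" None] bd_act_Ay_None[of y] by simp

fun beta :: "bdpt \<Rightarrow> complex \<Rightarrow> real" where
  "beta None z = Im z"
| "beta (Some x) z = Im z / (cmod (z - of_real x))\<^sup>2"

fun hval :: "bdpt \<Rightarrow> real \<Rightarrow> real" where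
  "hval None r = r"
| "hval (Some x) r = 1 / (2 * r)"

fun hinv :: "bdpt \<Rightarrow> real \<Rightarrow> real" where
  "hinv None v = v"
| "hinv (Some x) v = 1 / (2 * v)"

lemma hval_hinv: "v > 0 \<Longrightarrow> hval \<xi> (hinv \<xi> v) = v" by (cases \<xi>) auto
lemma hinv_pos: "v > 0 \<Longrightarrow> hinv \<xi> v > 0" by (cases \<xi>) auto
lemma hval_pos: "r > 0 \<Longrightarrow> hval \<xi> r > 0" by (cases \<xi>) auto

lemma cmod_sq: "(cmod z)\<^sup>2 = (Re z)\<^sup>2 + (Im z)\<^sup>2" by (simp add: cmod_power2)

lemma sq_eq_r: "r > 0 \<Longrightarrow> cmod w = r \<longleftrightarrow> (cmod w)\<^sup>2 = r\<^sup>2"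
  using power2_eq_iff_nonneg[of "cmod w" r] by simp
lemma sq_less_r: "r > 0 \<Longrightarrow> cmod w < r \<longleftrightarrow> (cmod w)\<^sup>2 < r\<^sup>2"
  using power_strict_mono[of "cmod w" r 2] power2_less_imp_less[of "cmod w" r] by auto

lemma horo_aux: fixes P b r :: real assumes "P > 0" "r > 0"
  shows "P = 2*r*b \<longleftrightarrow> b / P = 1/(2*r)" "P < 2*r*b \<longleftrightarrow> 1/(2*r) < b / P"
proof -
  show "P = 2*r*b \<longleftrightarrow> b / P = 1/(2*r)" using assms by (simp add: frac_eq_eq) argo
  have "1/(2*r) < b / P \<longleftrightarrow> P < b * (2*r)" using assms
    by (simp add: divide_less_eq pos_less_divide_eq)
  thus "P < 2*r*b \<longleftrightarrow> 1/(2*r) < b / P" by (simp add: mult.commute mult.left_commute)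
qed

lemma horo_beta: assumes "r > 0"
  shows "z \<in> horocycle \<xi> r \<longleftrightarrow> Im z > 0 \<and> beta \<xi> z = hval \<xi> r"
proof (cases \<xi>)
  case None thus ?thesis using assms by auto
next
  case (Some x)
  obtain a b where z: "z = Complex a b" by (cases z)
  have 1: "(cmod (z - Complex x r) = r) \<longleftrightarrow> (a-x)^2 + (b-r)^2 = r^2"
    unfolding sq_eq_r[OF assms] by (simp add: z cmod_sq)
  have 2: "(cmod (z - of_real x))\<^sup>2 = (a-x)^2 + b^2" unfolding z cmod_sq by simp
  show ?thesis
  proof (cases "b > 0")
    case True
    have p: "(a-x)^2 + b^2 > 0" using True by (simp add: add_nonneg_pos)
    have "(a-x)^2 + (b-r)^2 = r^2 \<longleftrightarrow> (a-x)^2 + b^2 = 2*r*b" by (simp add: power2_eq_square algebra_simps)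
    also have "\<dots> \<longleftrightarrow> b / ((a-x)^2 + b^2) = 1/(2*r)" using horo_aux(1)[OF p assms] .
    finally show ?thesis using Some True 1 2 z by simp
  qed (use z Some in auto)
qed

lemma horoball_beta: assumes "r > 0"
  shows "z \<in> horoball \<xi> r \<longleftrightarrow> Im z > 0 \<and> beta \<xi> z > hval \<xi> r"
proof (cases \<xi>)
  case None thus ?thesis using assms by auto
next
  case (Some x)
  obtain a b where z: "z = Complex a b" by (cases z)
  have 1: "(cmod (z - Complex x r) < r) \<longleftrightarrow> (a-x)^2 + (b-r)^2 < r^2"
    unfolding sq_less_r[OF assms] by (simp add: z cmod_sq)
  have 2: "(cmod (z - of_real x))\<^sup>2 = (a-x)^2 + b^2" unfolding z cmod_sq by simp
  have 3: "(a-x)^2 + (b-r)^2 < r^2 \<longleftrightarrow> (a-x)^2 + b^2 < 2*r*b" by (simp add: power2_eq_square algebra_simps)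
  show ?thesis
  proof (cases "b > 0")
    case True
    have p: "(a-x)^2 + b^2 > 0" using True by (simp add: add_nonneg_pos)
    have "(a-x)^2 + b^2 < 2*r*b \<longleftrightarrow> b / ((a-x)^2 + b^2) > 1/(2*r)" using horo_aux(2)[OF p assms] .
    thus ?thesis using Some True 1 2 3 z by simp
  next
    case False
    have "2*r*b \<le> 0" using False assms by (simp add: mult_nonneg_nonpos)
    hence "\<not> (a-x)^2 + b^2 < 2*r*b" by (smt (verit) zero_le_power2)
    thus ?thesis using Some False 1 3 z by simp
  qed
qed


lemma horo_Im: "r > 0 \<Longrightarrow> z \<in> horocycle \<xi> r \<Longrightarrow> Im z > 0" using horo_beta by blast
lemma horoball_Im: "r > 0 \<Longrightarrow> z \<in> horoball \<xi> r \<Longrightarrow> Im z > 0" using horoball_beta by blast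

fun kf :: "mat2 \<Rightarrow> bdpt \<Rightarrow> real" where
  "kf A None = (if A$2$1 = 0 then 1 / (A$2$2)\<^sup>2 else (A$2$1)\<^sup>2)"
| "kf A (Some x) = (if A$2$1 * x + A$2$2 = 0 then 1 / (A$2$1)\<^sup>2 else (A$2$1 * x + A$2$2)\<^sup>2)"

lemma kf_pos: assumes "det A = 1" shows "kf A \<xi> > 0"
proof (cases \<xi>)
  case None thus ?thesis using assms by (auto simp: det2)
next
  case (Some x)
  have "\<not> (A$2$1 = 0 \<and> A$2$1 * x + A$2$2 = 0)" using assms by (auto simp: det2)
  thus ?thesis using Some by auto
qed

lemma beta_mob: assumes A: "det A = 1" and z: "Im z > 0"
  shows "beta (bd_act A \<xi>) (mob A z) = kf A \<xi> * beta \<xi> z"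
proof -
  have dz: "den A z \<noteq> 0" using den_nz A z by auto
  have Imm: "Im (mob A z) = Im z / (cmod (den A z))\<^sup>2" using Im_mob[OF z] A by simp
  have dzp: "cmod (den A z) > 0" using dz by simp
  show ?thesis
  proof (cases \<xi>)
    case None
    show ?thesis
    proof (cases "A$2$1 = 0")
      case True
      have "den A z = of_real (A$2$2)" using True by (simp add: den_def)
      thus ?thesis using None True Imm by (simp add: power2_eq_square)
    next
      case False
      have e: "of_real (A$1$1) * of_real (A$2$2) - of_real (A$1$2) * of_real (A$2$1) = (1::complex)"
        using A unfolding det2 by (metis of_real_1 of_real_mult of_real_diff)
      have "mob A z - of_real (A$1$1 / A$2$1) = - 1 / (of_real (A$2$1) * den A z)"
        using False dz e unfolding mob_den den_def by (simp add: field_simps)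
      hence "(cmod (mob A z - of_real (A$1$1 / A$2$1)))\<^sup>2 = 1 / ((A$2$1)\<^sup>2 * (cmod (den A z))\<^sup>2)"
        by (simp add: norm_divide norm_mult power_mult_distrib power_divide)
      hence Q: "(cmod (mob A z - of_real (A$1$1 / A$2$1)))\<^sup>2 = 1 / ((A$2$1)\<^sup>2 * (cmod (den A z))\<^sup>2)" .
      have "beta (bd_act A \<xi>) (mob A z) = Im (mob A z) / (cmod (mob A z - of_real (A$1$1 / A$2$1)))\<^sup>2"
        using None False by (simp del: of_real_divide)
      also have "\<dots> = (Im z / (cmod (den A z))\<^sup>2) / (1 / ((A$2$1)\<^sup>2 * (cmod (den A z))\<^sup>2))"
        by (simp only: Q Imm)
      also have "\<dots> = (A$2$1)\<^sup>2 * Im z" using dzp False by (simp add: field_simps)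
      finally show ?thesis using None False by simp
    qed
  next
    case (Some x)
    show ?thesis
    proof (cases "A$2$1 * x + A$2$2 = 0")
      case True
      have c: "A$2$1 \<noteq> 0" using True A by (auto simp: det2)
      have "den A z = of_real (A$2$1) * (z - of_real x)"
        using True unfolding den_def by (simp add: algebra_simps) (metis add_diff_cancel_left' diff_0 minus_diff_eq of_real_add of_real_mult of_real_eq_0_iff)
      hence "(cmod (den A z))\<^sup>2 = (A$2$1)\<^sup>2 * (cmod (z - of_real x))\<^sup>2" by (simp add: norm_mult power_mult_distrib)
      thus ?thesis using Some True Imm c by (simp add: field_simps)
    next
      case False
      have dx: "den A (of_real x) \<noteq> 0" using False unfolding den_def by (metis of_real_add of_real_eq_0_iff of_real_mult)
      have mx: "mob A (of_real x) = of_real ((A$1$1 * x + A$1$2) / (A$2$1 * x + A$2$2))"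
        unfolding mob_def by simp
      have "mob A z - mob A (of_real x) = (z - of_real x) / (den A z * den A (of_real x))"
        using mob_diff[OF A dz dx] .
      moreover have "cmod (den A (of_real x)) = \<bar>A$2$1 * x + A$2$2\<bar>" unfolding den_def
        by (metis norm_of_real of_real_add of_real_mult)
      ultimately have "(cmod (mob A z - of_real ((A$1$1 * x + A$1$2) / (A$2$1 * x + A$2$2))))\<^sup>2
          = (cmod (z - of_real x))\<^sup>2 / ((cmod (den A z))\<^sup>2 * (A$2$1 * x + A$2$2)\<^sup>2)"
        unfolding mx by (simp add: norm_divide norm_mult power_mult_distrib power_divide)
      hence Q: "(cmod (mob A z - of_real ((A$1$1 * x + A$1$2) / (A$2$1 * x + A$2$2))))\<^sup>2
          = (cmod (z - of_real x))\<^sup>2 / ((cmod (den A z))\<^sup>2 * (A$2$1 * x + A$2$2)\<^sup>2)" .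
      have zx: "cmod (z - of_real x) > 0" using z by auto
      have "beta (bd_act A \<xi>) (mob A z) = Im (mob A z) / (cmod (mob A z - of_real ((A$1$1 * x + A$1$2) / (A$2$1 * x + A$2$2))))\<^sup>2"
        using Some False by (simp del: of_real_divide of_real_add of_real_mult)
      also have "\<dots> = (Im z / (cmod (den A z))\<^sup>2) / ((cmod (z - of_real x))\<^sup>2 / ((cmod (den A z))\<^sup>2 * (A$2$1 * x + A$2$2)\<^sup>2))"
        by (simp only: Q Imm)
      also have "\<dots> = (A$2$1 * x + A$2$2)\<^sup>2 * (Im z / (cmod (z - of_real x))\<^sup>2)" using dzp zx False by (simp add: field_simps)
      finally show ?thesis using Some False by simp
    qed
  qed
qed


lemma horo_transport: assumes A: "det A = 1" and r: "r > 0"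
  shows "\<exists>r'>0. \<forall>z. Im z > 0 \<longrightarrow>
     (mob A z \<in> horocycle (bd_act A \<xi>) r' \<longleftrightarrow> z \<in> horocycle \<xi> r) \<and>
     (mob A z \<in> horoball (bd_act A \<xi>) r' \<longleftrightarrow> z \<in> horoball \<xi> r)"
proof -
  define k where "k = kf A \<xi>"
  have k: "k > 0" using kf_pos[OF A] k_def by simp
  define r' where "r' = hinv (bd_act A \<xi>) (k * hval \<xi> r)"
  have kh: "k * hval \<xi> r > 0" using k hval_pos[OF r] by simp
  have r': "r' > 0" unfolding r'_def using hinv_pos[OF kh] .
  have hv: "hval (bd_act A \<xi>) r' = k * hval \<xi> r" unfolding r'_def using hval_hinv[OF kh] .
  show ?thesis
  proof (intro exI[of _ r'] conjI allI impI r')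
    fix z assume z: "Im z > 0"
    have Im': "Im (mob A z) > 0" using Im_mob_pos[OF z A] .
    have b: "beta (bd_act A \<xi>) (mob A z) = k * beta \<xi> z" using beta_mob[OF A z] k_def by simp
    show "(mob A z \<in> horocycle (bd_act A \<xi>) r') = (z \<in> horocycle \<xi> r)"
      unfolding horo_beta[OF r'] horo_beta[OF r] b hv using z Im' k by auto
    show "(mob A z \<in> horoball (bd_act A \<xi>) r') = (z \<in> horoball \<xi> r)"
      unfolding horoball_beta[OF r'] horoball_beta[OF r] b hv using z Im' k by auto
  qed
qed

lemma horo_image:
  assumes A: "det A = 1" and r: "r > 0" and r': "r' > 0"
    and h: "\<forall>z. Im z > 0 \<longrightarrow> (mob A z \<in> horocycle \<xi>' r' \<longleftrightarrow> z \<in> horocycle \<xi> r)"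
  shows "mob A ` horocycle \<xi> r = horocycle \<xi>' r'"
proof
  show "mob A ` horocycle \<xi> r \<subseteq> horocycle \<xi>' r'" using h horo_Im[OF r] by auto
  show "horocycle \<xi>' r' \<subseteq> mob A ` horocycle \<xi> r"
  proof
    fix w assume w: "w \<in> horocycle \<xi>' r'"
    have wI: "Im w > 0" using horo_Im[OF r' w] .
    define z where "z = mob (inv2 A) w"
    have zI: "Im z > 0" unfolding z_def using Im_mob_pos[OF wI] A by simp
    have "mob A z = w" unfolding z_def using mob_inv2_r[OF A wI] .
    thus "w \<in> mob A ` horocycle \<xi> r" using h zI w by force
  qed
qed

lemma horo_Ay: assumes "\<rho> > 0"
  shows "z \<in> horocycle (Some y) \<rho> \<longleftrightarrow> Im z > 0 \<and> Im (mob (inv2 (Ay y)) z) = 1 / (2*\<rho>)"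
    "z \<in> horoball (Some y) \<rho> \<longleftrightarrow> Im z > 0 \<and> Im (mob (inv2 (Ay y)) z) > 1 / (2*\<rho>)"
proof -
  have k: "kf (inv2 (Ay y)) (Some y) = 1" by (simp add: Ay_def)
  have "Im z > 0 \<Longrightarrow> Im (mob (inv2 (Ay y)) z) = beta (Some y) z"
    using beta_mob[of "inv2 (Ay y)" z "Some y"] k bd_act_Ayi[of y] by simp
  thus "z \<in> horocycle (Some y) \<rho> \<longleftrightarrow> Im z > 0 \<and> Im (mob (inv2 (Ay y)) z) = 1 / (2*\<rho>)"
    "z \<in> horoball (Some y) \<rho> \<longleftrightarrow> Im z > 0 \<and> Im (mob (inv2 (Ay y)) z) > 1 / (2*\<rho>)"
    using horo_beta[OF assms, of z "Some y"] horoball_beta[OF assms, of z "Some y"] by auto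
qed

lemma arclen_mob: assumes A: "det A = 1" and H: "arclen_param H C" and C: "\<forall>z\<in>C. Im z > 0"
  shows "arclen_param (\<lambda>s. mob A (H s)) (mob A ` C)"
  unfolding arclen_param_def
proof (intro conjI allI)
  have inj: "inj_on (mob A) C" using mob_inv2_l[OF A] C by (metis inj_on_inverseI)
  have "bij_betw (mob A \<circ> H) UNIV (mob A ` C)"
    using bij_betw_trans[of H UNIV C "mob A" "mob A ` C"] H inj unfolding arclen_param_def
    by (simp add: bij_betw_imageI)
  thus "bij_betw (\<lambda>s. mob A (H s)) UNIV (mob A ` C)" by (simp add: comp_def)
  fix s
  obtain v where v: "(H has_vector_derivative v) (at s)" "cmod v = Im (H s)" using H unfolding arclen_param_def by blast
  have Hs: "H s \<in> C" using H unfolding arclen_param_def bij_betw_def by blast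
  hence I: "Im (H s) > 0" using C by blast
  have d: "den A (H s) \<noteq> 0" using den_nz[of A "H s"] A I by simp
  have "((mob A \<circ> H) has_vector_derivative (v * (1 / (den A (H s))\<^sup>2))) (at s)"
    using field_vector_diff_chain_at[OF v(1) mob_deriv[OF A d]] .
  moreover have "cmod (v * (1 / (den A (H s))\<^sup>2)) = Im (mob A (H s))"
    using Im_mob[OF I] A v(2) by (simp add: norm_mult norm_divide norm_power)
  ultimately show "\<exists>v. ((\<lambda>s. mob A (H s)) has_vector_derivative v) (at s) \<and> cmod v = Im (mob A (H s))"
    by (auto simp: comp_def)
qed

lemma speed_bound: fixes f :: "real \<Rightarrow> complex"
  assumes ab: "a < b" and d: "\<And>s. (f has_vector_derivative v s) (at s)" and B: "\<And>s. cmod (v s) \<le> B"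
  shows "cmod (f b - f a) \<le> B * (b - a)"
proof -
  have c: "continuous_on {a..b} f"
    using d by (intro continuous_at_imp_continuous_on ballI has_vector_derivative_continuous) auto
  obtain x where "norm (f b - f a) \<le> norm ((b - a) *\<^sub>R v x)"
    using mvt_general[OF ab c, of "\<lambda>x t. t *\<^sub>R v x"] d unfolding has_vector_derivative_def by blast
  also have "\<dots> = (b - a) * cmod (v x)" using ab by simp
  also have "\<dots> \<le> (b - a) * B" using B ab by (simp add: mult_left_mono)
  finally show ?thesis by (simp add: mult.commute)
qed

lemma mob_transl: "e \<noteq> 0 \<Longrightarrow> mob (mk e (e*k) 0 e) w = w + of_real k"
  by (simp add: mob_def field_simps)

lemma conj_mob: assumes A: "det A = 1" and q: "det q = 1" and w: "Im w > 0"
  shows "mob q (mob A w) = mob A (mob (inv2 A ** q ** A) w)"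
proof -
  have I1: "Im (mob A w) > 0" using Im_mob_pos[OF w A] .
  have "mob (inv2 A ** q ** A) w = mob (inv2 A ** q) (mob A w)"
    using mob_mult[of "inv2 A ** q" A w] A q w by (simp add: det_mult2)
  also have "\<dots> = mob (inv2 A) (mob q (mob A w))"
    using mob_mult[of "inv2 A" q "mob A w"] A q I1 by simp
  finally have "mob A (mob (inv2 A ** q ** A) w) = mob A (mob (inv2 A) (mob q (mob A w)))" by simp
  also have "\<dots> = mob q (mob A w)" using mob_inv2_r[OF A] Im_mob_pos[OF I1 q] by simp
  finally show ?thesis by simp
qed

lemma horiz_param: fixes xc :: real assumes h: "h > 0" and t: "\<tau> \<noteq> 0"
  defines "w \<equiv> \<lambda>s. Complex (xc + sgn \<tau> * h * s) h"
  shows "arclen_param w {z. Im z = h}" "\<And>s. w s + of_real \<tau> = w (s + \<bar>\<tau>\<bar> / h)"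
    "(w has_vector_derivative of_real (sgn \<tau> * h)) (at s)"
proof -
  have sg: "sgn \<tau> * sgn \<tau> = 1" using t by (simp add: sgn_if)
  have der: "(w has_vector_derivative of_real (sgn \<tau> * h)) (at s)" for s
  proof -
    have "((\<lambda>s. of_real (xc + sgn \<tau> * h * s) + \<i> * of_real h) has_vector_derivative of_real (sgn \<tau> * h)) (at s)"
      unfolding has_vector_derivative_def by (rule derivative_eq_intros refl | simp add: scaleR_conv_of_real fun_eq_iff)+
    moreover have "(\<lambda>s. of_real (xc + sgn \<tau> * h * s) + \<i> * of_real h) = w" unfolding w_def by (auto simp: complex_eq_iff)
    ultimately show ?thesis by simp
  qed
  thus "(w has_vector_derivative of_real (sgn \<tau> * h)) (at s)" .
  show "arclen_param w {z. Im z = h}" unfolding arclen_param_def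
  proof (intro conjI allI)
    show "bij_betw w UNIV {z. Im z = h}"
    proof (rule bij_betw_byWitness[of _ "\<lambda>z. (Re z - xc) / (sgn \<tau> * h)"])
      show "\<forall>a\<in>UNIV. (Re (w a) - xc) / (sgn \<tau> * h) = a" using h t by (auto simp: w_def sgn_if)
      show "\<forall>a'\<in>{z. Im z = h}. w ((Re a' - xc) / (sgn \<tau> * h)) = a'" using h t by (auto simp: w_def sgn_if complex_eq_iff)
      show "w ` UNIV \<subseteq> {z. Im z = h}" by (auto simp: w_def)
      show "(\<lambda>z. (Re z - xc) / (sgn \<tau> * h)) ` {z. Im z = h} \<subseteq> UNIV" by simp
    qed
    fix s show "\<exists>v. (w has_vector_derivative v) (at s) \<and> cmod v = Im (w s)"
    proof (intro exI conjI)
      show "(w has_vector_derivative of_real (sgn \<tau> * h)) (at s)" by (rule der)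
      show "cmod (of_real (sgn \<tau> * h)) = Im (w s)" using h t unfolding norm_of_real by (simp add: w_def abs_mult sgn_if del: of_real_mult)
    qed
  qed
  fix s show "w s + of_real \<tau> = w (s + \<bar>\<tau>\<bar> / h)"
    using h t by (simp add: w_def complex_eq_iff algebra_simps sgn_if)
qed

lemma Ay_image: assumes r: "\<rho> > 0"
  shows "mob (Ay y) ` {z. Im z = 1/(2*\<rho>)} = horocycle (Some y) \<rho>"
proof
  have h: "1/(2*\<rho>) > 0" using r by simp
  show "mob (Ay y) ` {z. Im z = 1/(2*\<rho>)} \<subseteq> horocycle (Some y) \<rho>"
  proof
    fix z assume "z \<in> mob (Ay y) ` {z. Im z = 1/(2*\<rho>)}"
    then obtain w where w: "Im w = 1/(2*\<rho>)" "z = mob (Ay y) w" by auto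
    have wI: "Im w > 0" using w h by simp
    show "z \<in> horocycle (Some y) \<rho>" unfolding horo_Ay(1)[OF r] w(2)
      using Im_mob_pos[OF wI det_Ay] mob_inv2_l[OF det_Ay wI] w(1) by simp
  qed
  show "horocycle (Some y) \<rho> \<subseteq> mob (Ay y) ` {z. Im z = 1/(2*\<rho>)}"
  proof
    fix z assume z: "z \<in> horocycle (Some y) \<rho>"
    hence zI: "Im z > 0" and zh: "Im (mob (inv2 (Ay y)) z) = 1/(2*\<rho>)" using horo_Ay(1)[OF r] by auto
    have "z = mob (Ay y) (mob (inv2 (Ay y)) z)" using mob_inv2_r[OF det_Ay zI] by simp
    thus "z \<in> mob (Ay y) ` {z. Im z = 1/(2*\<rho>)}" using zh by blast
  qed
qed

lemma conj_mkq_same: "inv2 (Ay y) ** mkq e k y ** Ay y = mk e (e*k) 0 e"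
  using conj_mkq[of y e k y] by simp

lemma shift_lower: assumes r: "\<rho> > 0" and e: "e*e = 1"
  and K: "arclen_param K (horocycle (Some y) \<rho>)" and sh: "\<forall>s. mob (mkq e k y) (K s) = K (s + l)" and l: "l > 0"
  shows "2*\<rho>*\<bar>k\<bar> \<le> l"
proof -
  define Ai where "Ai = inv2 (Ay y)"
  have dAi: "det Ai = 1" unfolding Ai_def by simp
  define K2 where "K2 = (\<lambda>s. mob Ai (K s))"
  have KH: "K s \<in> horocycle (Some y) \<rho>" for s using K unfolding arclen_param_def bij_betw_def by blast
  have KI: "Im (K s) > 0" for s using horo_Im[OF r KH] .
  have K2h: "Im (K2 s) = 1/(2*\<rho>)" for s using horo_Ay(1)[OF r] KH[of s] unfolding K2_def Ai_def by blast
  have C: "\<forall>z\<in>horocycle (Some y) \<rho>. Im z > 0" using horo_Im[OF r] by blast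
  have A2: "arclen_param K2 (mob Ai ` horocycle (Some y) \<rho>)" unfolding K2_def by (rule arclen_mob[OF dAi K C])
  obtain v where v: "\<And>s. (K2 has_vector_derivative v s) (at s) \<and> cmod (v s) = Im (K2 s)"
    using A2 unfolding arclen_param_def by metis
  have b: "cmod (K2 l - K2 0) \<le> (1/(2*\<rho>)) * (l - 0)"
    by (rule speed_bound[OF l]) (use v K2h in auto)
  have "K2 l = K2 0 + of_real k"
  proof -
    have e0: "e \<noteq> 0" using e by auto
    define w where "w = K2 0"
    have wI: "Im w > 0" unfolding w_def K2_def using Im_mob_pos[OF KI dAi] .
    have K0: "K 0 = mob (Ay y) w" unfolding w_def K2_def Ai_def using mob_inv2_r[OF det_Ay KI] by simp
    have "K l = mob (mkq e k y) (K 0)" using sh[rule_format, of 0] by simp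
    also have "\<dots> = mob (Ay y) (mob (mk e (e*k) 0 e) w)"
      unfolding K0 using conj_mob[OF det_Ay det_mkq[OF e] wI] conj_mkq_same by simp
    also have "\<dots> = mob (Ay y) (w + of_real k)" using mob_transl[OF e0] by simp
    finally have "K2 l = mob Ai (mob (Ay y) (w + of_real k))" unfolding K2_def by simp
    also have "\<dots> = w + of_real k" unfolding Ai_def using mob_inv2_l[OF det_Ay, of "w + of_real k"] wI by simp
    finally show ?thesis unfolding w_def .
  qed
  hence "\<bar>k\<bar> \<le> l / (2*\<rho>)" using b by simp
  thus ?thesis using r by (simp add: field_simps)
qed

lemma parabolic_form_None:
  assumes d: "det p = 1" and pp: "parabolic p" and f: "bd_act p None = None"
  shows "\<exists>e \<tau>. e*e = 1 \<and> \<tau> \<noteq> 0 \<and> p = mk e (e*\<tau>) 0 e"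
proof -
  obtain a b c d' where q: "p = mk a b c d'" by (metis mat2_mk)
  have c: "c = 0" using f q by (auto split: if_splits)
  have det: "a*d' = 1" using d q c by (simp add: det2)
  have tr0: "\<bar>a + d'\<bar> = 2" using pp q unfolding parabolic_def mtrace_def by simp
  define e where "e = (a + d')/2"
  have "e = 1 \<or> e = -1" using tr0 unfolding e_def by (auto simp: abs_if split: if_splits)
  hence e: "e*e = 1" by auto
  have "(a - e)^2 = 0"
  proof -
    have "(a - e)^2 = a*a - a*(a+d') + e*e" unfolding e_def by (simp add: power2_eq_square field_simps)
    thus ?thesis using det e by (simp add: algebra_simps)
  qed
  hence a: "a = e" by simp
  have d'': "d' = e" using a e_def by simp
  have b: "b \<noteq> 0"
  proof
    assume "b = 0"
    hence "p = mk e 0 0 e" using q a d'' c by simp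
    hence "p = mat 1 \<or> p = - mat 1" using e by (auto simp: mat2_eq) (metis mult_cancel_left1 square_eq_1_iff)
    thus False using pp unfolding parabolic_def by auto
  qed
  show ?thesis
    apply (rule exI[of _ e], rule exI[of _ "e*b"])
    using e b q a d'' c by (auto simp: mat2_eq mult.assoc[symmetric])
qed

lemma horo_param_exists:
  assumes d: "det p = 1" and pp: "parabolic p" and f: "bd_act p \<xi> = \<xi>" and r: "r > 0"
  shows "\<exists>l>0. \<exists>H. arclen_param H (horocycle \<xi> r) \<and> (\<forall>s. mob p (H s) = H (s + l))"
proof (cases \<xi>)
  case None
  obtain e \<tau> where e: "e*e = 1" "\<tau> \<noteq> 0" "p = mk e (e*\<tau>) 0 e" using parabolic_form_None[OF d pp] f None by auto
  define w where "w = (\<lambda>s. Complex (0 + sgn \<tau> * r * s) r)"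
  have e0: "e \<noteq> 0" using e by auto
  show ?thesis
  proof (intro exI conjI allI)
    show "\<bar>\<tau>\<bar>/r > 0" using e r by simp
    show "arclen_param w (horocycle \<xi> r)" using horiz_param(1)[OF r e(2), where xc=0] None unfolding w_def by simp
    fix s show "mob p (w s) = w (s + \<bar>\<tau>\<bar> / r)"
      using horiz_param(2)[OF r e(2), where xc=0] mob_transl[OF e0] e(3) unfolding w_def by simp
  qed
next
  case (Some y)
  obtain e k where e: "e = 1 \<or> e = -1" "k \<noteq> 0" "p = mkq e k y" using parabolic_form[OF d pp] f Some by blast
  have e1: "e*e = 1" and e0: "e \<noteq> 0" using e by auto
  define h where "h = 1/(2*r)"
  have h: "h > 0" using r h_def by simp
  define w where "w = (\<lambda>s. Complex (0 + sgn k * h * s) h)"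
  have wa: "arclen_param w {z. Im z = h}" using horiz_param(1)[OF h e(2), where xc=0] unfolding w_def by simp
  have C: "\<forall>z\<in>{z. Im z = h}. Im z > 0" using h by simp
  have Ha: "arclen_param (\<lambda>s. mob (Ay y) (w s)) (horocycle \<xi> r)"
    using arclen_mob[OF det_Ay[of y] wa C] Ay_image[OF r, of y] Some unfolding h_def by simp
  show ?thesis
  proof (intro exI conjI allI)
    show "\<bar>k\<bar>/h > 0" using e h by simp
    show "arclen_param (\<lambda>s. mob (Ay y) (w s)) (horocycle \<xi> r)" by (rule Ha)
    fix s
    have wI: "Im (w s) > 0" using h unfolding w_def by simp
    have "mob p (mob (Ay y) (w s)) = mob (Ay y) (mob (mk e (e*k) 0 e) (w s))"
      unfolding e(3) using conj_mob[OF det_Ay det_mkq[OF e1] wI] conj_mkq_same by simp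
    also have "\<dots> = mob (Ay y) (w s + of_real k)" using mob_transl[OF e0] by simp
    also have "\<dots> = mob (Ay y) (w (s + \<bar>k\<bar>/h))" using horiz_param(2)[OF h e(2), where xc=0] unfolding w_def by simp
    finally show "mob p (mob (Ay y) (w s)) = mob (Ay y) (w (s + \<bar>k\<bar>/h))" .
  qed
qed

lemma tangent_point: assumes y: "y \<noteq> 0"
  shows "mob (Ay y) (Complex (1/(2*y)) (1/(2*\<bar>y\<bar>))) = \<i> * of_real \<bar>y\<bar>"
    "of_real (- sgn y * (1/(2*\<bar>y\<bar>))) * (1 / (den (Ay y) (Complex (1/(2*y)) (1/(2*\<bar>y\<bar>))))\<^sup>2) = \<i> * of_real \<bar>y\<bar>"
proof -
  define w where "w = Complex (1/(2*y)) (1/(2*\<bar>y\<bar>))"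
  have w0: "w \<noteq> 0" using y by (simp add: w_def complex_eq_iff)
  have dw: "den (Ay y) w = w" by (simp add: den_def Ay_def)
  have "mob (Ay y) w = (of_real y * w - 1) / w" by (simp add: mob_def Ay_def)
  also have "\<dots> = \<i> * of_real \<bar>y\<bar>"
  proof -
    have "of_real y * w - 1 = \<i> * of_real \<bar>y\<bar> * w" using y
      by (cases "y > 0") (auto simp: w_def complex_eq_iff field_simps)
    thus ?thesis using w0 by (simp add: divide_eq_eq)
  qed
  finally show "mob (Ay y) (Complex (1/(2*y)) (1/(2*\<bar>y\<bar>))) = \<i> * of_real \<bar>y\<bar>" unfolding w_def .
  have H: "of_real (- sgn y * (1/(2*\<bar>y\<bar>))) = (\<i> * of_real \<bar>y\<bar>) * w\<^sup>2" using y
    by (cases "y > 0") (auto simp: w_def complex_eq_iff field_simps power2_eq_square)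
  have "of_real (- sgn y * (1/(2*\<bar>y\<bar>))) * (1 / w\<^sup>2) = \<i> * of_real \<bar>y\<bar>"
    unfolding H using w0 by (simp add: field_simps power2_eq_square del: of_real_mult)
  thus "of_real (- sgn y * (1/(2*\<bar>y\<bar>))) * (1 / (den (Ay y) (Complex (1/(2*y)) (1/(2*\<bar>y\<bar>))))\<^sup>2) = \<i> * of_real \<bar>y\<bar>"
    unfolding w_def[symmetric] dw .
qed

lemma tangent_param: assumes y: "y \<noteq> 0" and e: "e*e = 1" and k: "k \<noteq> 0"
  shows "\<exists>K q'. arclen_param K (horocycle (Some y) \<bar>y\<bar>) \<and> K 0 = \<i> * of_real \<bar>y\<bar> \<and>
     (K has_vector_derivative \<i> * of_real \<bar>y\<bar>) (at 0) \<and>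
     (q' = mkq e k y \<or> q' = inv2 (mkq e k y)) \<and> (\<forall>s. mob q' (K s) = K (s + 2*\<bar>y\<bar>*\<bar>k\<bar>))"
proof -
  define \<tau> where "\<tau> = - sgn y * \<bar>k\<bar>"
  have t0: "\<tau> \<noteq> 0" using y k by (simp add: \<tau>_def sgn_if)
  have st: "sgn \<tau> = - sgn y" using k by (simp add: \<tau>_def sgn_mult)
  have at: "\<bar>\<tau>\<bar> = \<bar>k\<bar>" using y by (simp add: \<tau>_def abs_mult)
  have e0: "e \<noteq> 0" using e by auto
  define q' where "q' = (if \<tau> = k then mkq e k y else inv2 (mkq e k y))"
  have q'o: "q' = mkq e k y \<or> q' = inv2 (mkq e k y)" unfolding q'_def by simp
  have dq: "det q' = 1" unfolding q'_def using det_mkq[OF e] by simp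
  have cq: "inv2 (Ay y) ** q' ** Ay y = mk e (e*\<tau>) 0 e"
  proof (cases "\<tau> = k")
    case True thus ?thesis unfolding q'_def using conj_mkq_same by simp
  next
    case False
    hence tk: "\<tau> = -k" using at by (auto simp: abs_if split: if_splits)
    have "inv2 (Ay y) ** inv2 (mkq e k y) ** Ay y = inv2 (inv2 (Ay y) ** mkq e k y ** Ay y)"
      by (simp add: inv2_mult matrix_mul_assoc)
    also have "\<dots> = mk e (e*\<tau>) 0 e" unfolding conj_mkq_same tk by (simp add: inv2_def)
    finally show ?thesis unfolding q'_def using False by simp
  qed
  define h where "h = 1/(2*\<bar>y\<bar>)"
  have h: "h > 0" using y h_def by simp
  have ay: "\<bar>y\<bar> > 0" using y by simp
  define w where "w = (\<lambda>s. Complex (1/(2*y) + sgn \<tau> * h * s) h)"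
  have wa: "arclen_param w {z. Im z = h}" using horiz_param(1)[OF h t0] unfolding w_def by simp
  have C: "\<forall>z\<in>{z. Im z = h}. Im z > 0" using h by simp
  define K where "K = (\<lambda>s. mob (Ay y) (w s))"
  have Ka: "arclen_param K (horocycle (Some y) \<bar>y\<bar>)"
    using arclen_mob[OF det_Ay[of y] wa C] Ay_image[OF ay, of y] unfolding h_def K_def by simp
  have w0: "w 0 = Complex (1/(2*y)) (1/(2*\<bar>y\<bar>))" unfolding w_def h_def by simp
  have K0: "K 0 = \<i> * of_real \<bar>y\<bar>" unfolding K_def w0 using tangent_point(1)[OF y] .
  have w0I: "Im (w 0) > 0" using h unfolding w_def by simp
  have dd: "den (Ay y) (w 0) \<noteq> 0" using den_nz[of "Ay y" "w 0"] w0I by simp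
  have "((mob (Ay y) \<circ> w) has_vector_derivative (of_real (sgn \<tau> * h) * (1 / (den (Ay y) (w 0))\<^sup>2))) (at 0)"
  proof (rule field_vector_diff_chain_at)
    show "(w has_vector_derivative of_real (sgn \<tau> * h)) (at 0)"
      using horiz_param(3)[OF h t0, where xc="1/(2*y)" and s=0] unfolding w_def by simp
    show "(mob (Ay y) has_field_derivative 1 / (den (Ay y) (w 0))\<^sup>2) (at (w 0))"
      using mob_deriv[OF det_Ay dd] .
  qed
  hence KD: "(K has_vector_derivative \<i> * of_real \<bar>y\<bar>) (at 0)"
    unfolding K_def comp_def st h_def w0 using tangent_point(2)[OF y] by simp
  have sh: "mob q' (K s) = K (s + 2*\<bar>y\<bar>*\<bar>k\<bar>)" for s
  proof -
    have wI: "Im (w s) > 0" using h unfolding w_def by simp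
    have "mob q' (K s) = mob (Ay y) (mob (mk e (e*\<tau>) 0 e) (w s))"
      unfolding K_def using conj_mob[OF det_Ay dq wI] cq by simp
    also have "\<dots> = mob (Ay y) (w s + of_real \<tau>)" using mob_transl[OF e0] by simp
    also have "\<dots> = mob (Ay y) (w (s + \<bar>\<tau>\<bar>/h))" using horiz_param(2)[OF h t0] unfolding w_def by simp
    also have "\<bar>\<tau>\<bar>/h = 2*\<bar>y\<bar>*\<bar>k\<bar>" unfolding at h_def by simp
    finally show ?thesis unfolding K_def .
  qed
  show ?thesis using Ka K0 KD q'o sh by blast
qed

definition HX :: "complex \<Rightarrow> real" where "HX z = ((Re z)\<^sup>2 + (Im z)\<^sup>2 + 1) / (2 * Im z)"
definition HV1 :: "complex \<Rightarrow> real" where "HV1 z = ((Re z)\<^sup>2 + (Im z)\<^sup>2 - 1) / (2 * Im z)"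
definition HV2 :: "complex \<Rightarrow> real" where "HV2 z = Re z / Im z"

lemma hdist_arg_ge1: "Im z > 0 \<Longrightarrow> Im w > 0 \<Longrightarrow> 1 + (cmod (z - w))\<^sup>2 / (2 * Im z * Im w) \<ge> 1"
  by simp

lemma cosh_hdist: assumes "Im z > 0" "Im w > 0"
  shows "cosh (hdist z w) = HX z * HX w - HV1 z * HV1 w - HV2 z * HV2 w"
proof -
  have "cosh (hdist z w) = 1 + (cmod (z - w))\<^sup>2 / (2 * Im z * Im w)"
    unfolding hdist_def using hdist_arg_ge1[OF assms] by simp
  also have "\<dots> = HX z * HX w - HV1 z * HV1 w - HV2 z * HV2 w"
    using assms unfolding HX_def HV1_def HV2_def cmod_sq
    by (simp add: field_simps power2_eq_square)
  finally show ?thesis .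
qed

lemma HXV_i: "HX \<i> = 1" "HV1 \<i> = 0" "HV2 \<i> = 0" by (simp_all add: HX_def HV1_def HV2_def)

lemma cosh_abs_real: "cosh \<bar>x::real\<bar> = cosh x" by (cases "x \<ge> 0") (auto simp: cosh_minus)

lemma geod_unique_norm:
  fixes \<delta> :: "real \<Rightarrow> complex"
  assumes d0: "\<delta> 0 = \<i>" and dd: "(\<delta> has_vector_derivative \<i>) (at 0)"
    and dI: "\<And>s. Im (\<delta> s) > 0" and dh: "\<And>s t. hdist (\<delta> s) (\<delta> t) = \<bar>s - t\<bar>"
  shows "\<delta> s = \<i> * of_real (exp s)"
proof -
  have ch: "cosh (s - t) = HX (\<delta> s) * HX (\<delta> t) - HV1 (\<delta> s) * HV1 (\<delta> t) - HV2 (\<delta> s) * HV2 (\<delta> t)" for s t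
    using cosh_hdist[OF dI dI, of s t] dh[of s t] cosh_abs_real by simp
  have X: "HX (\<delta> s) = cosh s" for s using ch[of s 0] d0 HXV_i by simp
  have dot: "HV1 (\<delta> s) * HV1 (\<delta> t) + HV2 (\<delta> s) * HV2 (\<delta> t) = sinh s * sinh t" for s t
    using ch[of s t] X[of s] X[of t] cosh_diff[of s t] by simp
  have par: "HV1 (\<delta> s) * sinh t = HV1 (\<delta> t) * sinh s \<and> HV2 (\<delta> s) * sinh t = HV2 (\<delta> t) * sinh s" for s t
  proof -
    have "(HV1 (\<delta> s) * sinh t - HV1 (\<delta> t) * sinh s)\<^sup>2 + (HV2 (\<delta> s) * sinh t - HV2 (\<delta> t) * sinh s)\<^sup>2 =
       (HV1 (\<delta> s) * HV1 (\<delta> s) + HV2 (\<delta> s) * HV2 (\<delta> s)) * (sinh t)\<^sup>2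
       - 2 * (HV1 (\<delta> s) * HV1 (\<delta> t) + HV2 (\<delta> s) * HV2 (\<delta> t)) * sinh s * sinh t
       + (HV1 (\<delta> t) * HV1 (\<delta> t) + HV2 (\<delta> t) * HV2 (\<delta> t)) * (sinh s)\<^sup>2"
      by (simp add: power2_eq_square algebra_simps)
    also have "\<dots> = 0" unfolding dot by (simp add: power2_eq_square algebra_simps)
    finally show ?thesis by (simp add: add_nonneg_eq_0_iff)
  qed
  define E1 where "E1 = HV1 (\<delta> 1) / sinh 1"
  define E2 where "E2 = HV2 (\<delta> 1) / sinh 1"
  have s1: "sinh (1::real) \<noteq> 0" by simp
  have V1: "HV1 (\<delta> s) = sinh s * E1" for s using par[of s 1] s1 unfolding E1_def by (simp add: field_simps)
  have V2: "HV2 (\<delta> s) = sinh s * E2" for s using par[of s 1] s1 unfolding E2_def by (simp add: field_simps)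
  have R0: "Re (\<delta> 0) = 0" and I0: "Im (\<delta> 0) = 1" using d0 by simp_all
  have dRe: "((\<lambda>s. Re (\<delta> s)) has_real_derivative 0) (at 0)" using has_field_derivative_Re[OF dd] by simp
  have dIm: "((\<lambda>s. Im (\<delta> s)) has_real_derivative 1) (at 0)" using has_field_derivative_Im[OF dd] by simp
  have "((\<lambda>s. HV1 (\<delta> s)) has_real_derivative 1) (at 0)"
  proof -
    have "((\<lambda>s. ((Re (\<delta> s))\<^sup>2 + (Im (\<delta> s))\<^sup>2 - 1) / (2 * Im (\<delta> s))) has_real_derivative
       ((2 * Re (\<delta> 0) * 0 + 2 * Im (\<delta> 0) * 1 - 0) * (2 * Im (\<delta> 0)) - ((Re (\<delta> 0))\<^sup>2 + (Im (\<delta> 0))\<^sup>2 - 1) * (2 * 1))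
        / ((2 * Im (\<delta> 0)) * (2 * Im (\<delta> 0)))) (at 0)"
      by (rule derivative_eq_intros dRe dIm refl | simp add: I0)+
    thus ?thesis unfolding HV1_def R0 I0 by simp
  qed
  moreover have "((\<lambda>s. HV1 (\<delta> s)) has_real_derivative E1) (at 0)"
    unfolding V1 by (auto intro!: derivative_eq_intros)
  ultimately have e1: "E1 = 1" using DERIV_unique by blast
  have "((\<lambda>s. HV2 (\<delta> s)) has_real_derivative 0) (at 0)"
  proof -
    have "((\<lambda>s. Re (\<delta> s) / Im (\<delta> s)) has_real_derivative
       (0 * Im (\<delta> 0) - Re (\<delta> 0) * 1) / (Im (\<delta> 0) * Im (\<delta> 0))) (at 0)"
      by (rule derivative_eq_intros dRe dIm refl | simp add: I0)+
    thus ?thesis unfolding HV2_def R0 I0 by simp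
  qed
  moreover have "((\<lambda>s. HV2 (\<delta> s)) has_real_derivative E2) (at 0)"
    unfolding V2 by (auto intro!: derivative_eq_intros)
  ultimately have e2: "E2 = 0" using DERIV_unique by blast
  have re: "Re (\<delta> s) = 0" using V2[of s] e2 dI[of s] unfolding HV2_def by simp
  have "HX (\<delta> s) + HV1 (\<delta> s) = Im (\<delta> s)" using dI[of s] re unfolding HX_def HV1_def by (simp add: field_simps power2_eq_square)
  hence "Im (\<delta> s) = exp s" using X[of s] V1[of s] e1 by (simp add: cosh_plus_sinh)
  thus ?thesis using re by (simp add: complex_eq_iff)
qed

lemma tends_unique: assumes "tends_to_bd \<gamma> \<xi>1" "tends_to_bd \<gamma> \<xi>2" shows "\<xi>1 = \<xi>2"
proof -
  have nosome: False if a: "filterlim (\<lambda>t. cmod (\<gamma> t)) at_top at_top" and b: "(\<gamma> \<longlongrightarrow> complex_of_real x) at_top" for x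
  proof -
    have "((\<lambda>t. cmod (\<gamma> t)) \<longlongrightarrow> cmod (complex_of_real x)) at_top" using tendsto_norm[OF b] .
    thus False using not_tendsto_and_filterlim_at_infinity[OF _ _ filterlim_at_top_imp_at_infinity[OF a]] by simp
  qed
  show ?thesis
  proof (cases \<xi>1)
    case None
    thus ?thesis using assms nosome unfolding tends_to_bd_def by (cases \<xi>2) auto
  next
    case (Some x1)
    show ?thesis
    proof (cases \<xi>2)
      case None thus ?thesis using assms nosome Some unfolding tends_to_bd_def by auto
    next
      case (Some x2)
      have l1: "(\<gamma> \<longlongrightarrow> complex_of_real x1) at_top" using assms(1) \<open>\<xi>1 = Some x1\<close> unfolding tends_to_bd_def by simp
      have l2: "(\<gamma> \<longlongrightarrow> complex_of_real x2) at_top" using assms(2) Some unfolding tends_to_bd_def by simp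
      have "complex_of_real x1 = complex_of_real x2"
        using tendsto_unique[OF trivial_limit_at_top_linorder l1 l2] .
      thus ?thesis using Some \<open>\<xi>1 = Some x1\<close> by simp
    qed
  qed
qed

definition gmat :: "complex \<times> complex \<Rightarrow> mat2" where
  "gmat u = (let \<omega> = csqrt (\<i> / snd u); c = Im \<omega>; d = Re \<omega>; x = Re (fst u); y = Im (fst u)
             in mk (y*d + x*c) (x*d - y*c) c d)"

lemma gmat_props: assumes u: "u \<in> T1H"
  shows "det (gmat u) = 1" "mob (gmat u) \<i> = fst u" "snd u * (den (gmat u) \<i>)\<^sup>2 = \<i>" "den (gmat u) \<i> \<noteq> 0"
proof -
  obtain z v where uz: "u = (z, v)" by (cases u)
  have zI: "Im z > 0" and vz: "cmod v = Im z" using u uz unfolding T1H_def by auto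
  have v0: "v \<noteq> 0" using zI vz by auto
  define \<omega> where "\<omega> = csqrt (\<i> / v)"
  have w2: "\<omega>\<^sup>2 = \<i> / v" unfolding \<omega>_def by simp
  have g: "gmat u = mk (Im z * Re \<omega> + Re z * Im \<omega>) (Re z * Re \<omega> - Im z * Im \<omega>) (Im \<omega>) (Re \<omega>)"
    unfolding gmat_def uz \<omega>_def by (simp add: Let_def)
  have nw: "(cmod \<omega>)\<^sup>2 = 1 / Im z"
  proof -
    have "(cmod \<omega>)\<^sup>2 = cmod (\<omega>\<^sup>2)" by (simp add: norm_power)
    also have "\<dots> = 1 / Im z" unfolding w2 using vz by (simp add: norm_divide)
    finally show ?thesis .
  qed
  have "det (gmat u) = Im z * ((Re \<omega>)\<^sup>2 + (Im \<omega>)\<^sup>2)" unfolding g det2 by (simp add: power2_eq_square algebra_simps)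
  also have "\<dots> = 1" using nw zI unfolding cmod_sq by simp
  finally show "det (gmat u) = 1" .
  have dw: "den (gmat u) \<i> = \<omega>" unfolding g den_def by (simp add: complex_eq_iff)
  have w0: "\<omega> \<noteq> 0" using w2 v0 by auto
  thus "den (gmat u) \<i> \<noteq> 0" using dw by simp
  have "of_real (Im z * Re \<omega> + Re z * Im \<omega>) * \<i> + of_real (Re z * Re \<omega> - Im z * Im \<omega>) = z * \<omega>"
    by (simp add: complex_eq_iff)
  thus "mob (gmat u) \<i> = fst u" unfolding mob_den dw using w0 uz g by simp
  show "snd u * (den (gmat u) \<i>)\<^sup>2 = \<i>" unfolding dw w2 using uz v0 by simp
qed

lemma den_inv2_mob: assumes "det g = 1" "den g w \<noteq> 0"
  shows "den (inv2 g) (mob g w) = 1 / den g w"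
proof -
  have e: "of_real (g$1$1) * of_real (g$2$2) - of_real (g$1$2) * of_real (g$2$1) = (1::complex)"
    using assms(1) unfolding det2 by (metis of_real_1 of_real_mult of_real_diff)
  have "den (inv2 g) (mob g w) = (- of_real (g$2$1) * (of_real (g$1$1) * w + of_real (g$1$2)) + of_real (g$1$1) * den g w) / den g w"
    unfolding den_def mob_den using assms(2) by (simp add: field_simps den_def)
  also have "- of_real (g$2$1) * (of_real (g$1$1) * w + of_real (g$1$2)) + of_real (g$1$1) * den g w = (1::complex)"
    unfolding den_def using e by (simp add: algebra_simps)
  finally show ?thesis .
qed

lemma hdist_vert: "hdist (\<i> * of_real (exp s)) (\<i> * of_real (exp t)) = \<bar>s - t\<bar>"
proof -
  have "1 + (cmod (\<i> * of_real (exp s) - \<i> * of_real (exp t)))\<^sup>2 / (2 * Im (\<i> * of_real (exp s)) * Im (\<i> * of_real (exp t)))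
      = 1 + (exp s - exp t)\<^sup>2 / (2 * exp s * exp t)"
    by (simp add: cmod_sq)
  also have "\<dots> = (exp s / exp t + exp t / exp s) / 2"
    by (simp add: field_simps power2_eq_square)
  also have "\<dots> = cosh (s - t)" by (simp add: cosh_def exp_diff)
  finally have "hdist (\<i> * of_real (exp s)) (\<i> * of_real (exp t)) = arcosh (cosh (s - t))" unfolding hdist_def by simp
  also have "\<dots> = arcosh (cosh \<bar>s - t\<bar>)" by (simp only: cosh_abs_real)
  also have "\<dots> = \<bar>s - t\<bar>" by (rule arcosh_cosh_real) simp
  finally show ?thesis .
qed

lemma vert_deriv: "((\<lambda>s. \<i> * of_real (exp s)) has_vector_derivative \<i>) (at 0)"
proof -
  have "((\<lambda>s. \<i> * of_real (exp s)) has_vector_derivative \<i> * of_real (exp 0)) (at 0)"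
    unfolding has_vector_derivative_def
    by (rule derivative_eq_intros refl | simp add: scaleR_conv_of_real fun_eq_iff)+
  thus ?thesis by simp
qed

lemma vert_deriv_at: "((\<lambda>s. \<i> * of_real (exp s)) has_vector_derivative \<i> * of_real (exp t)) (at t)"
  unfolding has_vector_derivative_def
  by (rule derivative_eq_intros refl | simp add: scaleR_conv_of_real fun_eq_iff)+

lemma geod_eq: assumes u: "u \<in> T1H"
  shows "geod u = (\<lambda>s. mob (gmat u) (\<i> * of_real (exp s)))"
proof -
  define g where "g = gmat u"
  note gp = gmat_props[OF u, folded g_def]
  define \<gamma> where "\<gamma> = (\<lambda>s. mob g (\<i> * of_real (exp s)))"
  have vI: "Im (\<i> * of_real (exp s)) > 0" for s by simp
  have P: "\<gamma> 0 = fst u \<and> (\<gamma> has_vector_derivative snd u) (at 0) \<and>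
                     (\<forall>s. Im (\<gamma> s) > 0) \<and> (\<forall>s t. hdist (\<gamma> s) (\<gamma> t) = \<bar>s - t\<bar>)"
  proof (intro conjI allI)
    show "\<gamma> 0 = fst u" unfolding \<gamma>_def using gp(2) by simp
    have md: "(mob g has_field_derivative 1 / (den g \<i>)\<^sup>2) (at ((\<lambda>s. \<i> * of_real (exp s)) 0))"
      using mob_deriv[OF gp(1) gp(4)] by simp
    have "((mob g \<circ> (\<lambda>s. \<i> * of_real (exp s))) has_vector_derivative \<i> * (1 / (den g \<i>)\<^sup>2)) (at 0)"
      using field_vector_diff_chain_at[OF vert_deriv md] by simp
    moreover have "\<i> * (1 / (den g \<i>)\<^sup>2) = snd u" using gp(3) gp(4) by (simp add: field_simps)
    ultimately show "(\<gamma> has_vector_derivative snd u) (at 0)" unfolding \<gamma>_def comp_def by simp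
    fix s show "Im (\<gamma> s) > 0" unfolding \<gamma>_def using Im_mob_pos[OF vI gp(1)] .
    fix t show "hdist (\<gamma> s) (\<gamma> t) = \<bar>s - t\<bar>" unfolding \<gamma>_def using hdist_mob[OF gp(1) vI vI] hdist_vert by simp
  qed
  have U: "\<delta> = \<gamma>" if d: "\<delta> 0 = fst u \<and> (\<delta> has_vector_derivative snd u) (at 0) \<and>
                     (\<forall>s. Im (\<delta> s) > 0) \<and> (\<forall>s t. hdist (\<delta> s) (\<delta> t) = \<bar>s - t\<bar>)" for \<delta>
  proof
    fix s
    define \<delta>' where "\<delta>' = (\<lambda>s. mob (inv2 g) (\<delta> s))"
    have dg: "det (inv2 g) = 1" using gp(1) by simp
    have iI: "Im \<i> > 0" by simp
    have d0: "\<delta> 0 = mob g \<i>" using d gp(2) by simp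
    have "\<delta>' 0 = \<i>" unfolding \<delta>'_def d0 using mob_inv2_l[OF gp(1) iI] .
    moreover have "(\<delta>' has_vector_derivative \<i>) (at 0)"
    proof -
      have dn: "den (inv2 g) (\<delta> 0) = 1 / den g \<i>" unfolding d0 using den_inv2_mob[OF gp(1) gp(4)] .
      hence dn0: "den (inv2 g) (\<delta> 0) \<noteq> 0" using gp(4) by simp
      have dd: "(\<delta> has_vector_derivative snd u) (at 0)" using d by blast
      have "((mob (inv2 g) \<circ> \<delta>) has_vector_derivative snd u * (1 / (den (inv2 g) (\<delta> 0))\<^sup>2)) (at 0)"
        using field_vector_diff_chain_at[OF dd mob_deriv[OF dg dn0]] .
      moreover have "snd u * (1 / (den (inv2 g) (\<delta> 0))\<^sup>2) = \<i>" unfolding dn using gp(3) gp(4) by (simp add: field_simps)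
      ultimately show ?thesis unfolding \<delta>'_def comp_def by simp
    qed
    moreover have "Im (\<delta>' s) > 0" for s unfolding \<delta>'_def using Im_mob_pos[OF _ dg] d by blast
    moreover have "hdist (\<delta>' s) (\<delta>' t) = \<bar>s - t\<bar>" for s t unfolding \<delta>'_def using hdist_mob[OF dg] d by simp
    ultimately have "\<delta>' s = \<i> * of_real (exp s)" using geod_unique_norm[of \<delta>' s] by blast
    hence "mob g (\<delta>' s) = \<gamma> s" unfolding \<gamma>_def by simp
    moreover have "mob g (\<delta>' s) = \<delta> s" unfolding \<delta>'_def using mob_inv2_r[OF gp(1)] d by blast
    ultimately show "\<delta> s = \<gamma> s" by simp
  qed
  have "geod u = \<gamma>" unfolding geod_def
    by (rule the_equality[where P="\<lambda>\<gamma>. \<gamma> 0 = fst u \<and> (\<gamma> has_vector_derivative snd u) (at 0) \<and>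
                     (\<forall>s. Im (\<gamma> s) > 0) \<and> (\<forall>s t. hdist (\<gamma> s) (\<gamma> t) = \<bar>s - t\<bar>)", OF P U]) assumption
  thus ?thesis unfolding \<gamma>_def g_def .
qed

lemma exp_neg_tendsto: "((\<lambda>t. complex_of_real (exp (- t))) \<longlongrightarrow> 0) at_top"
proof -
  have "((\<lambda>t. exp (- t)) \<longlongrightarrow> (0::real)) at_top"
    using filterlim_compose[OF exp_at_bot filterlim_uminus_at_bot_at_top] by simp
  thus ?thesis using tendsto_of_real by fastforce
qed

lemma fwd_end_eq: assumes u: "u \<in> T1H"
  shows "fwd_end u = bd_act (gmat u) None"
proof -
  define g where "g = gmat u"
  note gp = gmat_props[OF u, folded g_def]
  have tb: "tends_to_bd (geod u) (bd_act g None)"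
  proof (cases "g$2$1 = 0")
    case True
    have d0: "g$2$2 \<noteq> 0" using gp(1) True by (auto simp: det2)
    have Im_eq: "Im (geod u t) = exp t / (g$2$2)\<^sup>2" for t
    proof -
      have "den g (\<i> * of_real (exp t)) = of_real (g$2$2)" using True by (simp add: den_def)
      thus ?thesis unfolding geod_eq[OF u, folded g_def] using Im_mob[of "\<i> * of_real (exp t)" g] gp(1) by simp
    qed
    have "filterlim (\<lambda>t. (1 / (g$2$2)\<^sup>2) * exp t) at_top at_top"
      by (rule filterlim_tendsto_pos_mult_at_top[OF tendsto_const _ exp_at_top]) (use d0 in simp)
    hence "filterlim (\<lambda>t. cmod (geod u t)) at_top at_top"
    proof (rule filterlim_at_top_mono)
      show "\<forall>\<^sub>F t in at_top. 1 / (g$2$2)\<^sup>2 * exp t \<le> cmod (geod u t)"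
      proof (intro always_eventually allI)
        fix t
        have "1 / (g$2$2)\<^sup>2 * exp t = Im (geod u t)" using Im_eq by simp
        also have "\<dots> \<le> cmod (geod u t)" using abs_Im_le_cmod[of "geod u t"] by linarith
        finally show "1 / (g$2$2)\<^sup>2 * exp t \<le> cmod (geod u t)" .
      qed
    qed
    thus ?thesis using True unfolding tends_to_bd_def by simp
  next
    case False
    let ?a = "complex_of_real (g$1$1)" and ?b = "complex_of_real (g$1$2)" and ?c = "complex_of_real (g$2$1)" and ?d = "complex_of_real (g$2$2)"
    have eq: "geod u t = (?a * \<i> + ?b * of_real (exp (-t))) / (?c * \<i> + ?d * of_real (exp (-t)))" for t
    proof -
      define E where "E = complex_of_real (exp t)"
      have E: "E \<noteq> 0" unfolding E_def by simp
      have ex: "complex_of_real (exp (-t)) = 1 / E" unfolding E_def by (simp add: exp_minus of_real_inverse divide_inverse)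
      have "geod u t = (?a * (\<i> * E) + ?b) / (?c * (\<i> * E) + ?d)"
        unfolding geod_eq[OF u, folded g_def] mob_def E_def by simp
      also have "\<dots> = ((?a * (\<i> * E) + ?b) / E) / ((?c * (\<i> * E) + ?d) / E)" using E by simp
      also have "(?a * (\<i> * E) + ?b) / E = ?a * \<i> + ?b * of_real (exp (-t))" unfolding ex using E by (simp add: field_simps)
      also have "(?c * (\<i> * E) + ?d) / E = ?c * \<i> + ?d * of_real (exp (-t))" unfolding ex using E by (simp add: field_simps)
      finally show ?thesis .
    qed
    have "((\<lambda>t. (?a * \<i> + ?b * of_real (exp (-t))) / (?c * \<i> + ?d * of_real (exp (-t)))) \<longlongrightarrow>
          (?a * \<i> + ?b * 0) / (?c * \<i> + ?d * 0)) at_top"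
      by (intro tendsto_intros exp_neg_tendsto) (use False in simp)
    moreover have "(?a * \<i> + ?b * 0) / (?c * \<i> + ?d * 0) = complex_of_real (g$1$1 / g$2$1)" using False by simp
    ultimately have "(geod u \<longlongrightarrow> complex_of_real (g$1$1 / g$2$1)) at_top" unfolding eq[abs_def] by simp
    thus ?thesis using False unfolding tends_to_bd_def by simp
  qed
  show ?thesis unfolding fwd_end_def g_def[symmetric] using tends_unique tb by blast
qed

definition l1 :: "mat2 \<Rightarrow> real" where "l1 M = \<bar>M$1$1\<bar> + \<bar>M$1$2\<bar> + \<bar>M$2$1\<bar> + \<bar>M$2$2\<bar>"

lemma norm_le_l1: "norm (M::mat2) \<le> l1 M"
proof -
  have "norm M \<le> (\<Sum>i\<in>UNIV. norm (M$i))" unfolding norm_vec_def by (rule L2_set_le_sum) simp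
  also have "\<dots> = norm (M$1) + norm (M$2)" by (simp add: sum_2)
  also have "\<dots> \<le> (\<bar>M$1$1\<bar> + \<bar>M$1$2\<bar>) + (\<bar>M$2$1\<bar> + \<bar>M$2$2\<bar>)"
    using norm_le_l1_cart[of "M$1"] norm_le_l1_cart[of "M$2"] by (simp add: sum_2)
  finally show ?thesis unfolding l1_def by simp
qed

lemma l1_nonneg: "l1 M \<ge> 0" by (simp add: l1_def)

lemma l1_mult: "l1 (A ** B) \<le> l1 A * l1 B"
proof -
  have "l1 (A ** B) \<le> \<bar>A$1$1\<bar>*\<bar>B$1$1\<bar> + \<bar>A$1$2\<bar>*\<bar>B$2$1\<bar> + (\<bar>A$1$1\<bar>*\<bar>B$1$2\<bar> + \<bar>A$1$2\<bar>*\<bar>B$2$2\<bar>)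
      + (\<bar>A$2$1\<bar>*\<bar>B$1$1\<bar> + \<bar>A$2$2\<bar>*\<bar>B$2$1\<bar>) + (\<bar>A$2$1\<bar>*\<bar>B$1$2\<bar> + \<bar>A$2$2\<bar>*\<bar>B$2$2\<bar>)"
    unfolding l1_def mult_ent
    by (intro add_mono order_trans[OF abs_triangle_ineq]) (simp_all add: abs_mult)
  also have "\<dots> \<le> l1 A * l1 B" unfolding l1_def
    by (simp add: algebra_simps)
  finally show ?thesis .
qed

lemma l1_conj: "l1 (B ** X ** C) \<le> l1 B * l1 X * l1 C"
proof -
  have "l1 (B ** X ** C) \<le> l1 (B ** X) * l1 C" by (rule l1_mult)
  also have "\<dots> \<le> (l1 B * l1 X) * l1 C" by (rule mult_right_mono[OF l1_mult l1_nonneg])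
  finally show ?thesis .
qed

lemma inv2_l_assoc: "det B = 1 \<Longrightarrow> inv2 B ** (B ** Z) = Z"
  by (simp add: matrix_mul_assoc inv2_l matrix_mul_lid)
lemma inv2_r_assoc: "det B = 1 \<Longrightarrow> B ** (inv2 B ** Z) = Z"
  by (simp add: matrix_mul_assoc inv2_r matrix_mul_lid)

lemma conj_mult: "det B = 1 \<Longrightarrow> (B ** X ** inv2 B) ** (B ** Y ** inv2 B) = B ** (X ** Y) ** inv2 B"
  by (simp add: matrix_mul_assoc[symmetric] inv2_l_assoc)

lemma conj_inv: "det B = 1 \<Longrightarrow> inv2 (B ** X ** inv2 B) = B ** inv2 X ** inv2 B"
  by (simp add: inv2_mult matrix_mul_assoc)

lemma conj_sub: fixes B X Y C :: mat2 shows "B ** (X - Y) ** C = B ** X ** C - B ** Y ** C"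
  by (simp add: mat2_eq algebra_simps)

lemma conj_one: "det B = 1 \<Longrightarrow> B ** mat 1 ** inv2 B = mat 1"
  by (simp add: matrix_mul_rid inv2_r)

lemma conj_neg: fixes B X C :: mat2 shows "B ** (- X) ** C = - (B ** X ** C)"
  by (simp add: mat2_eq algebra_simps)

lemma fuch_inv: "fuchsian G \<Longrightarrow> M \<in> G \<Longrightarrow> inv2 M \<in> G"
  unfolding fuchsian_def using matrix_inv_eq by metis
lemma fuch_mult: "fuchsian G \<Longrightarrow> M \<in> G \<Longrightarrow> N \<in> G \<Longrightarrow> M ** N \<in> G"
  unfolding fuchsian_def by blast
lemma fuch_det: "fuchsian G \<Longrightarrow> M \<in> G \<Longrightarrow> det M = 1"
  unfolding fuchsian_def by blast
lemma fuch_neg: "fuchsian G \<Longrightarrow> M \<in> G \<Longrightarrow> - M \<in> G"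
proof -
  assume f: "fuchsian G" and M: "M \<in> G"
  have "- mat 1 \<in> G" using f unfolding fuchsian_def by blast
  hence "(- mat 1) ** M \<in> G" using fuch_mult[OF f _ M] by blast
  moreover have "(- mat 1) ** M = - M" by (simp add: mat2_eq)
  ultimately show ?thesis by simp
qed

lemma disc_conj: assumes f: "fuchsian G" and B: "det B = 1"
  shows "\<exists>\<delta>>0. \<forall>X. B ** X ** inv2 B \<in> G \<longrightarrow> l1 (X - mat 1) < \<delta> \<longrightarrow> X = mat 1"
proof -
  obtain e where e: "e > 0" "\<forall>M\<in>G. norm (M - mat 1) < e \<longrightarrow> M = mat 1" using f unfolding fuchsian_def by blast
  define C where "C = l1 B * l1 (inv2 B) + 1"
  have C: "C > 0" unfolding C_def using mult_nonneg_nonneg[OF l1_nonneg[of B] l1_nonneg[of "inv2 B"]] by linarith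
  show ?thesis
  proof (intro exI[of _ "e / C"] conjI allI impI)
    show "e / C > 0" using e C by simp
    fix X assume X: "B ** X ** inv2 B \<in> G" and l: "l1 (X - mat 1) < e / C"
    have eq: "B ** X ** inv2 B - mat 1 = B ** (X - mat 1) ** inv2 B" using conj_sub[of B X "mat 1" "inv2 B"] conj_one[OF B] by simp
    have "norm (B ** X ** inv2 B - mat 1) \<le> l1 (B ** (X - mat 1) ** inv2 B)" unfolding eq by (rule norm_le_l1)
    also have "\<dots> \<le> l1 B * l1 (X - mat 1) * l1 (inv2 B)" by (rule l1_conj)
    also have "\<dots> \<le> (l1 B * l1 (inv2 B)) * l1 (X - mat 1)" by (simp add: algebra_simps)
    also have "\<dots> \<le> C * l1 (X - mat 1)" unfolding C_def using l1_nonneg[of "X - mat 1"] by (simp add: algebra_simps)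
    also have "\<dots> < C * (e / C)" using l C by (intro mult_strict_left_mono)
    also have "\<dots> = e" using C by simp
    finally have "B ** X ** inv2 B = mat 1" using e(2) X by blast
    hence "inv2 B ** (B ** X ** inv2 B) ** B = inv2 B ** mat 1 ** B" by simp
    thus "X = mat 1" using B by (simp add: matrix_mul_assoc[symmetric] inv2_l_assoc inv2_l matrix_mul_rid matrix_mul_lid)
  qed
qed

lemma step_ent: fixes T :: mat2 assumes "det M = 1" "T = mk 1 b 0 1"
  shows "M ** T ** inv2 M = mk (1 - b*M$1$1*M$2$1) (b*(M$1$1)\<^sup>2) (-b*(M$2$1)\<^sup>2) (1 + b*M$1$1*M$2$1)"
  using assms by (simp add: mat2_eq det2 power2_eq_square algebra_simps)

lemma shimizu:
  assumes f: "fuchsian G" and B: "det B = 1" and b: "b \<noteq> 0"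
    and T: "B ** mk 1 b 0 1 ** inv2 B \<in> G" and Q: "B ** Q ** inv2 B \<in> G" and dQ: "det Q = 1"
    and c: "Q$2$1 \<noteq> 0"
  shows "\<bar>Q$2$1 * b\<bar> \<ge> 1"
proof (rule ccontr)
  assume "\<not> \<bar>Q$2$1 * b\<bar> \<ge> 1"
  hence q1: "\<bar>Q$2$1 * b\<bar> < 1" by simp
  define T where "T = mk 1 b 0 1"
  have dT: "det T = 1" unfolding T_def by (simp add: det2)
  define Qs where "Qs = rec_nat Q (\<lambda>n M. M ** T ** inv2 M)"
  have Qs0: "Qs 0 = Q" and QsS: "\<And>n. Qs (Suc n) = Qs n ** T ** inv2 (Qs n)" unfolding Qs_def by simp_all
  have inv: "det (Qs n) = 1 \<and> B ** Qs n ** inv2 B \<in> G" for n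
  proof (induction n)
    case 0 thus ?case using Qs0 dQ Q by simp
  next
    case (Suc n)
    hence d: "det (Qs n) = 1" and m: "B ** Qs n ** inv2 B \<in> G" by auto
    have "det (Qs (Suc n)) = 1" unfolding QsS using d dT by (simp add: det_mult2)
    moreover have "B ** Qs (Suc n) ** inv2 B = ((B ** Qs n ** inv2 B) ** (B ** T ** inv2 B)) ** inv2 (B ** Qs n ** inv2 B)"
      unfolding QsS conj_inv[OF B] conj_mult[OF B] ..
    moreover have "inv2 (B ** Qs n ** inv2 B) \<in> G" using fuch_inv[OF f m] .
    ultimately show ?case using fuch_mult[OF f] m T unfolding T_def by metis
  qed
  define \<alpha> where "\<alpha> n = Qs n $1$1" for n
  define u where "u n = b * Qs n $2$1" for n
  have rec: "u (Suc n) = - (u n)\<^sup>2 \<and> \<alpha> (Suc n) = 1 - \<alpha> n * u n" for n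
    using step_ent[OF conjunct1[OF inv[of n]] T_def] unfolding u_def \<alpha>_def QsS by (simp add: power2_eq_square algebra_simps)
  define q where "q = \<bar>u 0\<bar>"
  have u0: "u 0 = Q$2$1 * b" unfolding u_def Qs0 by (simp add: mult.commute)
  have q: "0 < q" "q < 1" unfolding q_def u0 using q1 b c by (auto simp: abs_mult)
  have qS: "q^(Suc n) \<le> q" for n using q by (simp add: mult_left_le power_le_one)
  have ub: "\<bar>u n\<bar> \<le> q^(Suc n)" for n
  proof (induction n)
    case 0 thus ?case unfolding q_def by simp
  next
    case (Suc n)
    have "\<bar>u n\<bar> \<le> q" using Suc qS[of n] by linarith
    hence "\<bar>u n\<bar> * \<bar>u n\<bar> \<le> q * \<bar>u n\<bar>" by (rule mult_right_mono) simp
    hence "\<bar>u (Suc n)\<bar> \<le> q * \<bar>u n\<bar>" using rec[of n] by (simp add: power2_eq_square abs_mult)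
    also have "\<dots> \<le> q * q^(Suc n)" using Suc q by (simp add: mult_left_mono)
    finally show ?case by simp
  qed
  have ule: "\<bar>u n\<bar> \<le> 1" for n using ub[of n] qS[of n] q by linarith
  have un0: "u n \<noteq> 0" for n
  proof (induction n)
    case 0 thus ?case using q unfolding q_def by simp
  next
    case (Suc n) thus ?case using rec[of n] by simp
  qed
  define M where "M = max \<bar>\<alpha> 0\<bar> (1 / (1 - q))"
  have M1: "M * (1 - q) \<ge> 1" unfolding M_def using q by (smt (verit) divide_le_eq max.cobounded2 mult.commute)
  have M0: "M \<ge> 0" unfolding M_def by simp
  have ab: "\<bar>\<alpha> n\<bar> \<le> M" for n
  proof (induction n)
    case 0 thus ?case unfolding M_def by simp
  next
    case (Suc n)
    have uq: "\<bar>u n\<bar> \<le> q" using ub[of n] qS[of n] by linarith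
    have "\<bar>\<alpha> (Suc n)\<bar> \<le> 1 + \<bar>\<alpha> n\<bar> * \<bar>u n\<bar>" using rec[of n] abs_triangle_ineq4[of 1 "\<alpha> n * u n"] by (simp add: abs_mult)
    also have "\<dots> \<le> 1 + M * q" using Suc uq M0 by (simp add: mult_mono)
    also have "\<dots> \<le> M" using M1 by (simp add: algebra_simps)
    finally show ?case .
  qed
  define C where "C = 2*M + \<bar>b\<bar>*M*(M+1) + 1/\<bar>b\<bar>"
  have est: "l1 (Qs (Suc (Suc n)) - T) \<le> C * \<bar>u n\<bar>" for n
  proof -
    define a1 where "a1 = \<alpha> (Suc n)"
    define g1 where "g1 = Qs (Suc n) $2$1"
    define U where "U = \<bar>u n\<bar>"
    have U: "0 \<le> U" "U \<le> 1" unfolding U_def using ule by auto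
    have bg1: "b * g1 = - (u n)\<^sup>2" using rec[of n] unfolding u_def g1_def by simp
    have a1e: "a1 = 1 - \<alpha> n * u n" using rec[of n] unfolding a1_def by simp
    have a1M: "\<bar>a1\<bar> \<le> M" unfolding a1_def by (rule ab)
    have Qe: "Qs (Suc (Suc n)) = mk (1 - b*a1*g1) (b*a1\<^sup>2) (-b*g1\<^sup>2) (1 + b*a1*g1)"
      unfolding QsS[of "Suc n"] a1_def g1_def \<alpha>_def by (rule step_ent[OF conjunct1[OF inv] T_def])
    have e1: "\<bar>b*a1*g1\<bar> \<le> M * U"
    proof -
      have "\<bar>b*a1*g1\<bar> = \<bar>a1\<bar> * (U * U)" using bg1 unfolding U_def by (simp add: abs_mult power2_eq_square algebra_simps)
      also have "\<dots> \<le> M * (U * 1)" using a1M U M0 by (intro mult_mono) (auto intro: mult_left_mono)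
      finally show ?thesis by simp
    qed
    have e2: "\<bar>b*a1\<^sup>2 - b\<bar> \<le> \<bar>b\<bar>*M*(M+1) * U"
    proof -
      have "b*a1\<^sup>2 - b = b * (a1 - 1) * (a1 + 1)" by (simp add: power2_eq_square algebra_simps)
      also have "a1 - 1 = - (\<alpha> n * u n)" using a1e by simp
      finally have "\<bar>b*a1\<^sup>2 - b\<bar> = \<bar>b\<bar> * (\<bar>\<alpha> n\<bar> * U) * \<bar>a1 + 1\<bar>" unfolding U_def by (simp add: abs_mult)
      also have "\<dots> \<le> \<bar>b\<bar> * (M * U) * (M + 1)"
        using ab[of n] a1M U M0 by (intro mult_mono mult_left_mono) (auto simp: abs_triangle_ineq[THEN order_trans] intro: order_trans[OF abs_triangle_ineq])
      finally show ?thesis by (simp add: algebra_simps)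
    qed
    have e3: "\<bar>-b*g1\<^sup>2\<bar> \<le> U / \<bar>b\<bar>"
    proof -
      have bb: "\<bar>b*g1\<bar> = U*U" using bg1 unfolding U_def by (simp add: abs_mult power2_eq_square)
      have "-b*g1\<^sup>2 = - ((b*g1)*(b*g1)/b)" using b by (simp add: power2_eq_square field_simps)
      hence "\<bar>-b*g1\<^sup>2\<bar> = \<bar>b*g1\<bar> * \<bar>b*g1\<bar> / \<bar>b\<bar>" by (simp only: abs_minus_cancel abs_divide abs_mult)
      also have "\<dots> = (U*U)*(U*U) / \<bar>b\<bar>" unfolding bb ..
      also have "\<dots> \<le> U / \<bar>b\<bar>"
      proof (rule divide_right_mono)
        have "U*U \<le> 1" using U by (simp add: mult_le_one)
        hence "(U*U)*(U*U) \<le> U*U" using U by (simp add: mult_left_le)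
        also have "\<dots> \<le> U" using U by (simp add: mult_left_le)
        finally show "(U*U)*(U*U) \<le> U" .
      qed simp
      finally show ?thesis .
    qed
    have "l1 (Qs (Suc (Suc n)) - T) = \<bar>b*a1*g1\<bar> + \<bar>b*a1\<^sup>2 - b\<bar> + \<bar>-b*g1\<^sup>2\<bar> + \<bar>b*a1*g1\<bar>"
      unfolding Qe T_def l1_def by simp
    also have "\<dots> \<le> M*U + \<bar>b\<bar>*M*(M+1)*U + U/\<bar>b\<bar> + M*U" using e1 e2 e3 by linarith
    also have "\<dots> = C * \<bar>u n\<bar>" unfolding C_def U_def by (simp add: algebra_simps add_divide_distrib)
    finally show ?thesis .
  qed
  obtain \<delta> where \<delta>: "\<delta> > 0" "\<forall>X. B ** X ** inv2 B \<in> G \<longrightarrow> l1 (X - mat 1) < \<delta> \<longrightarrow> X = mat 1"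
    using disc_conj[OF f B] by blast
  define D where "D = (C + 1) * (l1 (inv2 T) + 1)"
  have D: "D > 0" unfolding D_def C_def using M0 l1_nonneg[of "inv2 T"] b by (intro mult_pos_pos) (auto intro!: add_nonneg_pos add_nonneg_nonneg mult_nonneg_nonneg)
  have "(\<lambda>n. q^n) \<longlonglongrightarrow> 0" using q by (intro LIMSEQ_power_zero) simp
  hence "eventually (\<lambda>n. q^n < \<delta> / D) sequentially" using \<delta> D by (intro order_tendstoD(2)) auto
  then obtain n where n: "q^n < \<delta> / D" unfolding eventually_sequentially by blast
  have un: "\<bar>u n\<bar> < \<delta> / D"
  proof -
    have "\<bar>u n\<bar> \<le> q^(Suc n)" by (rule ub)
    also have "\<dots> \<le> q^n" using q by (simp add: mult_left_le_one_le)
    finally show ?thesis using n by simp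
  qed
  define X where "X = Qs (Suc (Suc n)) ** inv2 T"
  have XI: "X - mat 1 = (Qs (Suc (Suc n)) - T) ** inv2 T"
  proof -
    have "(Qs (Suc (Suc n)) - T) ** inv2 T = Qs (Suc (Suc n)) ** inv2 T - T ** inv2 T" by (simp add: mat2_eq algebra_simps)
    thus ?thesis unfolding X_def using inv2_r[OF dT] by simp
  qed
  have "l1 (X - mat 1) \<le> l1 (Qs (Suc (Suc n)) - T) * l1 (inv2 T)" unfolding XI by (rule l1_mult)
  also have "\<dots> \<le> (C * \<bar>u n\<bar>) * l1 (inv2 T)" by (rule mult_right_mono[OF est l1_nonneg])
  also have "\<dots> \<le> D * \<bar>u n\<bar>"
  proof -
    have C0: "C \<ge> 0" unfolding C_def using M0 b by (auto intro!: add_nonneg_nonneg mult_nonneg_nonneg)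
    have "C * l1 (inv2 T) \<le> D" unfolding D_def using C0 l1_nonneg[of "inv2 T"] by (simp add: algebra_simps)
    thus ?thesis by (metis abs_ge_zero mult.commute mult.left_commute mult_right_mono)
  qed
  also have "\<dots> < D * (\<delta> / D)" using un D by (intro mult_strict_left_mono)
  also have "\<dots> = \<delta>" using D by simp
  finally have lX: "l1 (X - mat 1) < \<delta>" .
  have XG: "B ** X ** inv2 B \<in> G"
  proof -
    have "B ** X ** inv2 B = (B ** Qs (Suc (Suc n)) ** inv2 B) ** (B ** inv2 T ** inv2 B)"
      unfolding X_def conj_mult[OF B] ..
    also have "B ** inv2 T ** inv2 B = inv2 (B ** T ** inv2 B)" using conj_inv[OF B] by simp
    finally show ?thesis using fuch_mult[OF f] inv fuch_inv[OF f T] unfolding T_def by metis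
  qed
  have "X = mat 1" using \<delta>(2) XG lX by blast
  hence "Qs (Suc (Suc n)) = T"
  proof -
    assume "X = mat 1"
    hence "X ** T = T" by (simp add: matrix_mul_lid)
    moreover have "X ** T = Qs (Suc (Suc n))" unfolding X_def using inv2_l[OF dT] by (simp add: matrix_mul_assoc[symmetric] matrix_mul_rid)
    ultimately show ?thesis by simp
  qed
  hence "u (Suc (Suc n)) = 0" unfolding u_def T_def by simp
  thus False using un0 by blast
qed

lemma conj_back: "det A = 1 \<Longrightarrow> A ** (inv2 A ** p ** A) ** inv2 A = p"
  by (simp add: matrix_mul_assoc[symmetric] inv2_l_assoc inv2_r_assoc inv2_r matrix_mul_rid)

lemma conj_mob3: assumes A: "det A = 1" and q: "det q = 1" and w: "Im w > 0"
  shows "mob (A ** q ** inv2 A) (mob A w) = mob A (mob q w)"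
proof -
  have "mob (A ** q ** inv2 A) (mob A w) = mob (A ** q ** inv2 A ** A) w"
    using mob_mult[of "A ** q ** inv2 A" A w] A q w by (simp add: det_mult2)
  also have "A ** q ** inv2 A ** A = A ** q" by (simp add: matrix_mul_assoc[symmetric] inv2_l A matrix_mul_rid)
  also have "mob (A ** q) w = mob A (mob q w)" using mob_mult[of A q w] A q w by simp
  finally show ?thesis .
qed

lemma mtrace_inv2: "mtrace (inv2 M) = mtrace M" by (simp add: mtrace_def)
lemma inv2_mat1: "inv2 (mat 1) = mat 1" by (simp add: mat2_eq)
lemma inv2_neg: "inv2 (- M) = - inv2 M" by (simp add: mat2_eq)

lemma parabolic_inv2: "parabolic M \<Longrightarrow> parabolic (inv2 M)"
proof -
  assume p: "parabolic M"
  have "inv2 M \<noteq> mat 1" using p inv2_inv2[of M] inv2_mat1 unfolding parabolic_def by metis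
  moreover have "inv2 M \<noteq> - mat 1" using p inv2_inv2[of M] inv2_neg[of "mat 1"] inv2_mat1 unfolding parabolic_def by metis
  ultimately show ?thesis using p unfolding parabolic_def mtrace_inv2 by simp
qed

lemma mtrace_conj: "det A = 1 \<Longrightarrow> mtrace (inv2 A ** p ** A) = mtrace p"
proof -
  assume A: "det A = 1"
  have "mtrace (inv2 A ** p ** A) = mtrace (A ** (inv2 A ** p))" using mtrace_comm[of "inv2 A ** p" A] .
  also have "\<dots> = mtrace p" using inv2_r_assoc[OF A, of p] by simp
  finally show ?thesis .
qed

lemma parabolic_conj: assumes A: "det A = 1" and p: "parabolic p" shows "parabolic (inv2 A ** p ** A)"
proof -
  have "inv2 A ** p ** A \<noteq> mat 1"
  proof
    assume "inv2 A ** p ** A = mat 1"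
    hence "A ** (inv2 A ** p ** A) ** inv2 A = A ** mat 1 ** inv2 A" by simp
    thus False using conj_back[OF A, of p] conj_one[OF A] p unfolding parabolic_def by simp
  qed
  moreover have "inv2 A ** p ** A \<noteq> - mat 1"
  proof
    assume "inv2 A ** p ** A = - mat 1"
    hence "A ** (inv2 A ** p ** A) ** inv2 A = A ** (- mat 1) ** inv2 A" by simp
    thus False using conj_back[OF A, of p] conj_one[OF A] conj_neg[of A "mat 1" "inv2 A"] p unfolding parabolic_def by simp
  qed
  ultimately show ?thesis using p mtrace_conj[OF A] unfolding parabolic_def by simp
qed

lemma det_parabolic_G: "fuchsian G \<Longrightarrow> p \<in> G \<Longrightarrow> det p = 1" by (rule fuch_det)

lemma mkq_neg: "mkq (-1) k y = - mkq 1 k y" by (simp add: mkq_def mat2_eq)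
lemma mkq_ne1: "k \<noteq> 0 \<Longrightarrow> mkq 1 k y \<noteq> mat 1" by (simp add: mkq_def mat2_eq)

lemma l1_mkq: "l1 (mkq 1 k y - mat 1) = \<bar>k\<bar> * (1 + \<bar>y\<bar>)\<^sup>2"
  by (simp add: l1_def mkq_def abs_mult power2_eq_square algebra_simps)

lemma far_away: assumes f: "fuchsian G" and g: "det g = 1"
  shows "\<exists>\<delta>>0. \<forall>p y e k. p \<in> G \<longrightarrow> (e = 1 \<or> e = -1) \<longrightarrow> k \<noteq> 0 \<longrightarrow> inv2 g ** p ** g = mkq e k y
      \<longrightarrow> \<bar>k\<bar> * (1 + \<bar>y\<bar>)\<^sup>2 \<ge> \<delta>"
proof -
  obtain \<delta> where \<delta>: "\<delta> > 0" "\<forall>X. g ** X ** inv2 g \<in> G \<longrightarrow> l1 (X - mat 1) < \<delta> \<longrightarrow> X = mat 1"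
    using disc_conj[OF f g] by blast
  show ?thesis
  proof (intro exI[of _ \<delta>] conjI allI impI \<delta>(1))
    fix p y e k assume p: "p \<in> G" and e: "e = 1 \<or> e = -1" and k: "k \<noteq> 0" and c: "inv2 g ** p ** g = mkq e k y"
    have pb: "g ** mkq e k y ** inv2 g = p" using conj_back[OF g, of p] c by simp
    have XG: "g ** mkq 1 k y ** inv2 g \<in> G"
    proof (cases "e = 1")
      case True thus ?thesis using pb p by simp
    next
      case False
      hence "e = -1" using e by simp
      hence "- (g ** mkq 1 k y ** inv2 g) = p" using pb conj_neg[of g "mkq 1 k y" "inv2 g"] mkq_neg by simp
      hence "g ** mkq 1 k y ** inv2 g = - p" by (metis minus_minus)
      thus ?thesis using fuch_neg[OF f p] by simp
    qed
    show "\<bar>k\<bar> * (1 + \<bar>y\<bar>)\<^sup>2 \<ge> \<delta>"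
    proof (rule ccontr)
      assume "\<not> \<bar>k\<bar> * (1 + \<bar>y\<bar>)\<^sup>2 \<ge> \<delta>"
      hence "l1 (mkq 1 k y - mat 1) < \<delta>" unfolding l1_mkq by simp
      hence "mkq 1 k y = mat 1" using \<delta>(2) XG by blast
      thus False using mkq_ne1[OF k] by simp
    qed
  qed
qed

lemma disk_disjoint: fixes w c1 c2 :: complex
  assumes "cmod (w - c1) < r1" "cmod (w - c2) < r2" "(r1 + r2)\<^sup>2 \<le> (cmod (c1 - c2))\<^sup>2" "r1 \<ge> 0" "r2 \<ge> 0"
  shows False
proof -
  have "c1 - c2 = (w - c2) - (w - c1)" by simp
  hence "cmod (c1 - c2) \<le> cmod (w - c2) + cmod (w - c1)" using norm_triangle_ineq4[of "w - c2" "w - c1"] by simp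
  hence "cmod (c1 - c2) < r1 + r2" using assms by linarith
  hence "(cmod (c1 - c2))\<^sup>2 < (r1 + r2)\<^sup>2" by (intro power_strict_mono) auto
  thus False using assms by linarith
qed

lemma horoball_Some_disk: "w \<in> horoball (Some y) \<bar>y\<bar> \<longleftrightarrow> cmod (w - Complex y \<bar>y\<bar>) < \<bar>y\<bar>" by simp

lemma normalized_disjoint:
  assumes f: "fuchsian G" and g: "det g = 1"
    and p1: "p1 \<in> G" and p2: "p2 \<in> G"
    and e1: "e1 = 1 \<or> e1 = -1" and e2: "e2 = 1 \<or> e2 = -1" and k1: "k1 \<noteq> 0" and k2: "k2 \<noteq> 0"
    and c1: "inv2 g ** p1 ** g = mkq e1 k1 y1" and c2: "inv2 g ** p2 ** g = mkq e2 k2 y2"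
    and yne: "y1 \<noteq> y2" and l1: "2*\<bar>y1\<bar>*\<bar>k1\<bar> \<le> 1" and l2: "2*\<bar>y2\<bar>*\<bar>k2\<bar> \<le> 1"
  shows "horoball (Some y1) \<bar>y1\<bar> \<inter> horoball (Some y2) \<bar>y2\<bar> = {}"
proof -
  define B where "B = g ** Ay y1"
  have B: "det B = 1" unfolding B_def using g by (simp add: det_mult2)
  have iB: "inv2 B = inv2 (Ay y1) ** inv2 g" unfolding B_def by (simp add: inv2_mult)
  have conjB: "B ** X ** inv2 B = g ** (Ay y1 ** X ** inv2 (Ay y1)) ** inv2 g" for X
    unfolding iB unfolding B_def by (simp add: matrix_mul_assoc)
  have pb1: "g ** mkq e1 k1 y1 ** inv2 g = p1" using conj_back[OF g, of p1] c1 by simp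
  have pb2: "g ** mkq e2 k2 y2 ** inv2 g = p2" using conj_back[OF g, of p2] c2 by simp
  have ay: "Ay y1 ** (inv2 (Ay y1) ** X ** Ay y1) ** inv2 (Ay y1) = X" for X using conj_back[OF det_Ay] .
  have T1: "B ** mk e1 (e1*k1) 0 e1 ** inv2 B = p1"
  proof -
    have "B ** mk e1 (e1*k1) 0 e1 ** inv2 B = g ** (Ay y1 ** (inv2 (Ay y1) ** mkq e1 k1 y1 ** Ay y1) ** inv2 (Ay y1)) ** inv2 g"
      unfolding conjB conj_mkq_same ..
    also have "\<dots> = p1" unfolding ay pb1 ..
    finally show ?thesis .
  qed
  have T: "B ** mk 1 k1 0 1 ** inv2 B \<in> G"
  proof (cases "e1 = 1")
    case True thus ?thesis using T1 p1 by simp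
  next
    case False
    hence "e1 = -1" using e1 by simp
    hence "mk e1 (e1*k1) 0 e1 = - mk 1 k1 0 1" by (simp add: mat2_eq)
    hence "- (B ** mk 1 k1 0 1 ** inv2 B) = p1" using T1 conj_neg[of B "mk 1 k1 0 1" "inv2 B"] by simp
    hence "B ** mk 1 k1 0 1 ** inv2 B = - p1" by (metis minus_minus)
    thus ?thesis using fuch_neg[OF f p1] by simp
  qed
  define Q where "Q = inv2 (Ay y1) ** mkq e2 k2 y2 ** Ay y1"
  have QG: "B ** Q ** inv2 B \<in> G" unfolding conjB Q_def ay pb2 using p2 .
  have dQ: "det Q = 1" unfolding Q_def using det_mkq[of e2 k2 y2] e2 by (auto simp: det_mult2)
  have Q21: "Q$2$1 = - e2*k2*(y1-y2)\<^sup>2" unfolding Q_def conj_mkq by simp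
  have d0: "(y1 - y2)\<^sup>2 > 0" using yne by simp
  have Qn: "Q$2$1 \<noteq> 0" unfolding Q21 using e2 k2 d0 by auto
  have sh: "\<bar>Q$2$1 * k1\<bar> \<ge> 1" using shimizu[OF f B k1 T QG dQ Qn] .
  hence sh': "\<bar>k2\<bar> * \<bar>k1\<bar> * (y1 - y2)\<^sup>2 \<ge> 1" unfolding Q21 using e2 by (auto simp: abs_mult mult_ac)
  have "4*\<bar>y1\<bar>*\<bar>y2\<bar> * (\<bar>k2\<bar> * \<bar>k1\<bar>) = (2*\<bar>y1\<bar>*\<bar>k1\<bar>) * (2*\<bar>y2\<bar>*\<bar>k2\<bar>)" by (simp add: algebra_simps)
  also have "\<dots> \<le> 1 * 1" using l1 l2 by (intro mult_mono) auto
  also have "\<dots> \<le> (y1 - y2)\<^sup>2 * (\<bar>k2\<bar> * \<bar>k1\<bar>)" using sh' by (simp add: algebra_simps)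
  finally have "4*\<bar>y1\<bar>*\<bar>y2\<bar> \<le> (y1 - y2)\<^sup>2" using k1 k2 by (simp add: mult_le_cancel_right)
  moreover have "(cmod (Complex y1 \<bar>y1\<bar> - Complex y2 \<bar>y2\<bar>))\<^sup>2 = (y1-y2)\<^sup>2 + (\<bar>y1\<bar> - \<bar>y2\<bar>)\<^sup>2"
    by (simp only: cmod_sq) simp
  moreover have "(\<bar>y1\<bar> + \<bar>y2\<bar>)\<^sup>2 = (\<bar>y1\<bar> - \<bar>y2\<bar>)\<^sup>2 + 4*\<bar>y1\<bar>*\<bar>y2\<bar>" by (simp add: power2_eq_square algebra_simps)
  ultimately have dist: "(\<bar>y1\<bar> + \<bar>y2\<bar>)\<^sup>2 \<le> (cmod (Complex y1 \<bar>y1\<bar> - Complex y2 \<bar>y2\<bar>))\<^sup>2"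
    by linarith
  show ?thesis
  proof (rule ccontr)
    assume "horoball (Some y1) \<bar>y1\<bar> \<inter> horoball (Some y2) \<bar>y2\<bar> \<noteq> {}"
    then obtain w where w1: "cmod (w - Complex y1 \<bar>y1\<bar>) < \<bar>y1\<bar>" and w2: "cmod (w - Complex y2 \<bar>y2\<bar>) < \<bar>y2\<bar>" by auto
    show False using disk_disjoint[OF w1 w2 dist] by simp
  qed
qed

lemma bd_act_conj3: assumes "det A = 1" "det B = 1" "det C = 1"
  shows "bd_act (A ** B ** C) \<xi> = bd_act A (bd_act B (bd_act C \<xi>))"
  using assms by (simp add: bd_act_mult det_mult2)

lemma normalize_n:
  assumes f: "fuchsian G" and u: "u \<in> T1H" and nfe: "\<not> parabolic_fixed_point G (fwd_end u)"
    and p: "p \<in> G" "parabolic p" "bd_act p \<xi> = \<xi>" and r: "r > 0"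
    and H: "arclen_param H (horocycle \<xi> r)" and sh: "\<forall>s. mob p (H s) = H (s + l)" and l: "l > 0"
    and t: "t \<ge> 0" and gt: "geod u t \<in> horocycle \<xi> r"
  shows "\<exists>y e k. bd_act (inv2 (gmat u)) \<xi> = Some y \<and> (e = 1 \<or> e = -1) \<and> k \<noteq> 0 \<and>
           inv2 (gmat u) ** p ** gmat u = mkq e k y \<and> \<bar>k\<bar> \<le> l \<and> 2*\<bar>y\<bar>*\<bar>k\<bar> \<le> l"
proof -
  define g where "g = gmat u"
  have g: "det g = 1" unfolding g_def using gmat_props[OF u] by simp
  have gi: "det (inv2 g) = 1" using g by simp
  have dp: "det p = 1" using fuch_det[OF f p(1)] .
  obtain y where y: "bd_act (inv2 g) \<xi> = Some y"
  proof (cases "bd_act (inv2 g) \<xi>")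
    case None
    have "\<xi> = bd_act g None" using bd_act_inv_r[OF g, of \<xi>] None by simp
    hence "\<xi> = fwd_end u" using fwd_end_eq[OF u] g_def by simp
    hence "parabolic_fixed_point G (fwd_end u)" using p unfolding parabolic_fixed_point_def by blast
    thus ?thesis using nfe by simp
  qed
  define q where "q = inv2 g ** p ** g"
  have dq: "det q = 1" unfolding q_def using g dp by (simp add: det_mult2)
  have pq: "parabolic q" unfolding q_def using parabolic_conj[OF g p(2)] .
  have gy: "bd_act g (Some y) = \<xi>" using bd_act_inv_r[OF g, of \<xi>] y by simp
  have fq: "bd_act q (Some y) = Some y" unfolding q_def bd_act_conj3[OF gi dp g] gy p(3) y ..
  obtain e k where ek: "e = 1 \<or> e = -1" "k \<noteq> 0" "q = mkq e k y" using parabolic_form[OF dq pq fq] by blast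
  have e1: "e*e = 1" using ek by auto
  obtain \<rho> where \<rho>: "\<rho> > 0" "\<forall>z. Im z > 0 \<longrightarrow> (mob (inv2 g) z \<in> horocycle (bd_act (inv2 g) \<xi>) \<rho> \<longleftrightarrow> z \<in> horocycle \<xi> r) \<and>
     (mob (inv2 g) z \<in> horoball (bd_act (inv2 g) \<xi>) \<rho> \<longleftrightarrow> z \<in> horoball \<xi> r)"
    using horo_transport[OF gi r] by blast
  have tr: "\<forall>z. Im z > 0 \<longrightarrow> (mob (inv2 g) z \<in> horocycle (Some y) \<rho> \<longleftrightarrow> z \<in> horocycle \<xi> r)" using \<rho>(2) y by simp
  have img: "mob (inv2 g) ` horocycle \<xi> r = horocycle (Some y) \<rho>" by (rule horo_image[OF gi r \<rho>(1) tr])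
  define K where "K = (\<lambda>s. mob (inv2 g) (H s))"
  have C: "\<forall>z\<in>horocycle \<xi> r. Im z > 0" using horo_Im[OF r] by blast
  have Ka: "arclen_param K (horocycle (Some y) \<rho>)" using arclen_mob[OF gi H C] img unfolding K_def by simp
  have HI: "Im (H s) > 0" for s using H C unfolding arclen_param_def bij_betw_def by blast
  have Ksh: "\<forall>s. mob (mkq e k y) (K s) = K (s + l)"
  proof
    fix s
    have "mob q (K s) = mob (inv2 g ** p ** inv2 (inv2 g)) (mob (inv2 g) (H s))" unfolding q_def K_def by simp
    also have "\<dots> = mob (inv2 g) (mob p (H s))" by (rule conj_mob3[OF gi dp HI])
    also have "\<dots> = K (s + l)" unfolding K_def using sh by simp
    finally show "mob (mkq e k y) (K s) = K (s + l)" using ek by simp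
  qed
  have kl: "2*\<rho>*\<bar>k\<bar> \<le> l" by (rule shift_lower[OF \<rho>(1) e1 Ka Ksh l])
  define E where "E = exp t"
  have E1: "E \<ge> 1" unfolding E_def using t by simp
  have wI: "Im (\<i> * of_real E) > 0" using E1 by simp
  have "geod u t = mob g (\<i> * of_real E)" unfolding geod_eq[OF u] g_def E_def by simp
  hence "mob g (\<i> * of_real E) \<in> horocycle \<xi> r" using gt by simp
  hence "mob (inv2 g) (mob g (\<i> * of_real E)) \<in> horocycle (Some y) \<rho>"
    using tr Im_mob_pos[OF wI g] by blast
  hence "\<i> * of_real E \<in> horocycle (Some y) \<rho>" using mob_inv2_l[OF g wI] by simp
  hence "cmod (\<i> * of_real E - Complex y \<rho>) = \<rho>" by simp
  hence "(cmod (\<i> * of_real E - Complex y \<rho>))\<^sup>2 = \<rho>\<^sup>2" by simp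
  hence "y\<^sup>2 + (E - \<rho>)\<^sup>2 = \<rho>\<^sup>2" by (simp only: cmod_sq) simp
  hence rel: "2*E*\<rho> = y\<^sup>2 + E\<^sup>2" by (simp add: power2_eq_square algebra_simps)
  have E0: "E > 0" using E1 by simp
  have r1: "2*\<rho> \<ge> 1"
  proof -
    have "E * (2*\<rho>) \<ge> E * E" using rel by (simp add: power2_eq_square algebra_simps)
    hence "2*\<rho> \<ge> E" using E0 by (rule mult_le_cancel_left_pos[THEN iffD1, rotated])
    thus ?thesis using E1 by simp
  qed
  have r2: "\<rho> \<ge> \<bar>y\<bar>"
  proof -
    have "(\<bar>y\<bar> - E)\<^sup>2 \<ge> 0" by simp
    hence "y\<^sup>2 + E\<^sup>2 \<ge> 2*E*\<bar>y\<bar>" by (simp add: power2_eq_square algebra_simps)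
    hence "E * \<rho> \<ge> E * \<bar>y\<bar>" using rel by simp
    thus ?thesis using E0 by (rule mult_le_cancel_left_pos[THEN iffD1, rotated])
  qed
  have "1 * \<bar>k\<bar> \<le> (2*\<rho>) * \<bar>k\<bar>" using r1 by (rule mult_right_mono) simp
  hence "\<bar>k\<bar> \<le> l" using kl by simp
  moreover have "(2*\<bar>y\<bar>) * \<bar>k\<bar> \<le> (2*\<rho>) * \<bar>k\<bar>" using r2 by (intro mult_right_mono) simp_all
  hence "2*\<bar>y\<bar>*\<bar>k\<bar> \<le> l" using kl by simp
  ultimately show ?thesis using y ek unfolding g_def q_def by blast
qed

lemma tangent_output:
  assumes f: "fuchsian G" and u: "u \<in> T1H"
    and p: "p \<in> G" "parabolic p" "bd_act p \<xi> = \<xi>"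
    and y: "bd_act (inv2 (gmat u)) \<xi> = Some y" "\<bar>y\<bar> \<ge> 1"
    and e: "e = 1 \<or> e = -1" and k: "k \<noteq> 0" and c: "inv2 (gmat u) ** p ** gmat u = mkq e k y"
  shows "\<exists>H p' r'. p' \<in> G \<and> parabolic p' \<and> bd_act p' \<xi> = \<xi> \<and> r' > 0 \<and> arclen_param H (horocycle \<xi> r') \<and>
     (\<forall>s. mob p' (H s) = H (s + 2*\<bar>y\<bar>*\<bar>k\<bar>)) \<and> geod u (ln \<bar>y\<bar>) = H 0 \<and>
     (\<exists>v. (geod u has_vector_derivative v) (at (ln \<bar>y\<bar>)) \<and> (H has_vector_derivative v) (at 0)) \<and>
     (\<forall>z. z \<in> horoball \<xi> r' \<longrightarrow> mob (inv2 (gmat u)) z \<in> horoball (Some y) \<bar>y\<bar>)"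
proof -
  define g where "g = gmat u"
  have g: "det g = 1" unfolding g_def using gmat_props[OF u] by simp
  have gi: "det (inv2 g) = 1" using g by simp
  have dp: "det p = 1" using fuch_det[OF f p(1)] .
  have y0: "y \<noteq> 0" using y(2) by auto
  have ay: "\<bar>y\<bar> > 0" using y0 by simp
  have e1: "e*e = 1" using e by auto
  obtain K q' where K: "arclen_param K (horocycle (Some y) \<bar>y\<bar>)" "K 0 = \<i> * of_real \<bar>y\<bar>"
     "(K has_vector_derivative \<i> * of_real \<bar>y\<bar>) (at 0)" "q' = mkq e k y \<or> q' = inv2 (mkq e k y)"
     "\<forall>s. mob q' (K s) = K (s + 2*\<bar>y\<bar>*\<bar>k\<bar>)"
    using tangent_param[OF y0 e1 k] by blast
  have dq': "det q' = 1" using K(4) det_mkq[OF e1] by auto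
  define p' where "p' = g ** q' ** inv2 g"
  have pb: "g ** mkq e k y ** inv2 g = p" using conj_back[OF g, of p] c unfolding g_def by simp
  have p'o: "p' = p \<or> p' = inv2 p"
  proof (cases "q' = mkq e k y")
    case True thus ?thesis unfolding p'_def using pb by simp
  next
    case False
    hence "q' = inv2 (mkq e k y)" using K(4) by simp
    hence "p' = inv2 (g ** mkq e k y ** inv2 g)" unfolding p'_def using conj_inv[OF g] by simp
    thus ?thesis using pb by simp
  qed
  have p'G: "p' \<in> G" using p'o p(1) fuch_inv[OF f p(1)] by auto
  have p'p: "parabolic p'" using p'o p(2) parabolic_inv2 by auto
  have p'f: "bd_act p' \<xi> = \<xi>" using p'o p(3) bd_act_inv_l[OF dp, of \<xi>] by auto
  have gy: "bd_act g (Some y) = \<xi>" using bd_act_inv_r[OF g, of \<xi>] y(1) unfolding g_def by simp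
  obtain r' where r': "r' > 0" "\<forall>z. Im z > 0 \<longrightarrow> (mob g z \<in> horocycle (bd_act g (Some y)) r' \<longleftrightarrow> z \<in> horocycle (Some y) \<bar>y\<bar>) \<and>
     (mob g z \<in> horoball (bd_act g (Some y)) r' \<longleftrightarrow> z \<in> horoball (Some y) \<bar>y\<bar>)"
    using horo_transport[OF g ay] by blast
  have tr: "\<forall>z. Im z > 0 \<longrightarrow> (mob g z \<in> horocycle \<xi> r' \<longleftrightarrow> z \<in> horocycle (Some y) \<bar>y\<bar>)" using r'(2) gy by simp
  have trb: "\<forall>z. Im z > 0 \<longrightarrow> (mob g z \<in> horoball \<xi> r' \<longleftrightarrow> z \<in> horoball (Some y) \<bar>y\<bar>)" using r'(2) gy by simp
  have img: "mob g ` horocycle (Some y) \<bar>y\<bar> = horocycle \<xi> r'" by (rule horo_image[OF g ay r'(1) tr])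
  define H where "H = (\<lambda>s. mob g (K s))"
  have C: "\<forall>z\<in>horocycle (Some y) \<bar>y\<bar>. Im z > 0" using horo_Im[OF ay] by blast
  have Ha: "arclen_param H (horocycle \<xi> r')" using arclen_mob[OF g K(1) C] img unfolding H_def by simp
  have KI: "Im (K s) > 0" for s using K(1) C unfolding arclen_param_def bij_betw_def by blast
  have Hsh: "\<forall>s. mob p' (H s) = H (s + 2*\<bar>y\<bar>*\<bar>k\<bar>)"
  proof
    fix s
    have "mob p' (H s) = mob g (mob q' (K s))" unfolding p'_def H_def by (rule conj_mob3[OF g dq' KI])
    thus "mob p' (H s) = H (s + 2*\<bar>y\<bar>*\<bar>k\<bar>)" using K(5) unfolding H_def by simp
  qed
  have ge: "geod u = (\<lambda>s. mob g (\<i> * of_real (exp s)))" unfolding g_def by (rule geod_eq[OF u])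
  have el: "exp (ln \<bar>y\<bar>) = \<bar>y\<bar>" using ay by simp
  have gH: "geod u (ln \<bar>y\<bar>) = H 0" unfolding ge H_def K(2) el ..
  have w0I: "Im (\<i> * of_real \<bar>y\<bar>) > 0" using ay by simp
  have dd: "den g (\<i> * of_real \<bar>y\<bar>) \<noteq> 0" using den_nz[of g] g w0I by simp
  have md: "(mob g has_field_derivative 1 / (den g (\<i> * of_real \<bar>y\<bar>))\<^sup>2) (at (\<i> * of_real \<bar>y\<bar>))" by (rule mob_deriv[OF g dd])
  define v where "v = \<i> * of_real \<bar>y\<bar> * (1 / (den g (\<i> * of_real \<bar>y\<bar>))\<^sup>2)"
  have d1: "(geod u has_vector_derivative v) (at (ln \<bar>y\<bar>))"
  proof -
    have md': "(mob g has_field_derivative 1 / (den g (\<i> * of_real \<bar>y\<bar>))\<^sup>2) (at ((\<lambda>s. \<i> * of_real (exp s)) (ln \<bar>y\<bar>)))"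
      using md el by simp
    have "((mob g \<circ> (\<lambda>s. \<i> * of_real (exp s))) has_vector_derivative \<i> * of_real (exp (ln \<bar>y\<bar>)) * (1 / (den g (\<i> * of_real \<bar>y\<bar>))\<^sup>2)) (at (ln \<bar>y\<bar>))"
      by (rule field_vector_diff_chain_at[OF vert_deriv_at md'])
    thus ?thesis unfolding ge v_def comp_def el .
  qed
  have d2: "(H has_vector_derivative v) (at 0)"
  proof -
    have md': "(mob g has_field_derivative 1 / (den g (\<i> * of_real \<bar>y\<bar>))\<^sup>2) (at (K 0))" using md K(2) by simp
    have "((mob g \<circ> K) has_vector_derivative \<i> * of_real \<bar>y\<bar> * (1 / (den g (\<i> * of_real \<bar>y\<bar>))\<^sup>2)) (at 0)"
      by (rule field_vector_diff_chain_at[OF K(3) md'])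
    thus ?thesis unfolding H_def v_def comp_def .
  qed
  have hb: "\<forall>z. z \<in> horoball \<xi> r' \<longrightarrow> mob (inv2 g) z \<in> horoball (Some y) \<bar>y\<bar>"
  proof (intro allI impI)
    fix z assume z: "z \<in> horoball \<xi> r'"
    have zI: "Im z > 0" using horoball_Im[OF r'(1) z] .
    have wI: "Im (mob (inv2 g) z) > 0" using Im_mob_pos[OF zI gi] .
    have "mob g (mob (inv2 g) z) \<in> horoball \<xi> r'" using mob_inv2_r[OF g zI] z by simp
    thus "mob (inv2 g) z \<in> horoball (Some y) \<bar>y\<bar>" using trb wI by blast
  qed
  show ?thesis unfolding g_def[symmetric] using p'G p'p p'f r'(1) Ha Hsh gH d1 d2 hb by blast
qed

lemma main_data:
  assumes f: "fuchsian G" and u: "u \<in> T1H" and cr: "cusp_recurrent G u"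
  shows "\<exists>\<xi> pp ll yy ee kk. (\<forall>n. pp n \<in> G \<and> parabolic (pp n) \<and> bd_act (pp n) (\<xi> n) = \<xi> n \<and> ll n > 0 \<and>
     bd_act (inv2 (gmat u)) (\<xi> n) = Some (yy n) \<and> (ee n = 1 \<or> ee n = -1) \<and> kk n \<noteq> 0 \<and>
     inv2 (gmat u) ** pp n ** gmat u = mkq (ee n) (kk n) (yy n) \<and> \<bar>kk n\<bar> \<le> ll n \<and> 2*\<bar>yy n\<bar>*\<bar>kk n\<bar> \<le> ll n) \<and>
     ll \<longlonglongrightarrow> 0 \<and> filterlim (\<lambda>n. \<bar>yy n\<bar>) at_top sequentially"
proof -
  obtain \<xi> r t where data: "\<forall>n. t n \<ge> 0 \<and> parabolic_fixed_point G (\<xi> n) \<and> r n > 0 \<and> geod u (t n) \<in> horocycle (\<xi> n) (r n)"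
    and CL: "(\<lambda>n. closed_horo_length G (\<xi> n) (r n)) \<longlonglongrightarrow> 0"
    and nfe: "\<not> parabolic_fixed_point G (fwd_end u)"
    using cr unfolding cusp_recurrent_def by blast
  define P where "P n p l H \<longleftrightarrow> p \<in> G \<and> parabolic p \<and> bd_act p (\<xi> n) = \<xi> n \<and> l > 0 \<and>
       l < closed_horo_length G (\<xi> n) (r n) + inverse (real (Suc n)) \<and>
       arclen_param H (horocycle (\<xi> n) (r n)) \<and> (\<forall>s. mob p (H s) = H (s + l))" for n p l H
  have exP: "\<exists>p l H. P n p l H" for n
  proof -
    define S where "S = {l. l > 0 \<and> (\<exists>p\<in>G. parabolic p \<and> bd_act p (\<xi> n) = \<xi> n \<and>
       (\<exists>H. arclen_param H (horocycle (\<xi> n) (r n)) \<and> (\<forall>s. mob p (H s) = H (s + l))))}"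
    have CLS: "closed_horo_length G (\<xi> n) (r n) = Inf S" unfolding closed_horo_length_def S_def ..
    obtain p0 where p0: "p0 \<in> G" "parabolic p0" "bd_act p0 (\<xi> n) = \<xi> n"
      using data unfolding parabolic_fixed_point_def by blast
    obtain l0 H0 where "l0 > 0" "arclen_param H0 (horocycle (\<xi> n) (r n))" "\<forall>s. mob p0 (H0 s) = H0 (s + l0)"
      using horo_param_exists[OF fuch_det[OF f p0(1)] p0(2) p0(3)] data by blast
    hence Sne: "S \<noteq> {}" unfolding S_def using p0 by blast
    have Sb: "bdd_below S" unfolding S_def by (rule bdd_belowI[of _ 0]) auto
    have "Inf S < Inf S + inverse (real (Suc n))" by simp
    then obtain l where l: "l \<in> S" "l < Inf S + inverse (real (Suc n))" using cInf_less_iff[OF Sne Sb] by blast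
    then obtain p H where "p \<in> G" "parabolic p" "bd_act p (\<xi> n) = \<xi> n" "arclen_param H (horocycle (\<xi> n) (r n))"
      "\<forall>s. mob p (H s) = H (s + l)" "l > 0" unfolding S_def by blast
    thus ?thesis unfolding P_def CLS using l(2) by blast
  qed
  obtain pp ll HH where PP: "\<forall>n. P n (pp n) (ll n) (HH n)" using exP by metis
  define Q where "Q n y e k \<longleftrightarrow> bd_act (inv2 (gmat u)) (\<xi> n) = Some y \<and> (e = 1 \<or> e = -1) \<and> k \<noteq> 0 \<and>
           inv2 (gmat u) ** pp n ** gmat u = mkq e k y \<and> \<bar>k\<bar> \<le> ll n \<and> 2*\<bar>y\<bar>*\<bar>k\<bar> \<le> ll n" for n y e k
  have exQ: "\<exists>y e k. Q n y e k" for n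
  proof -
    have Pn: "P n (pp n) (ll n) (HH n)" using PP by blast
    show ?thesis unfolding Q_def
      by (rule normalize_n[OF f u nfe, where p="pp n" and \<xi>="\<xi> n" and r="r n" and H="HH n" and l="ll n" and t="t n"])
        (use Pn data in \<open>auto simp: P_def\<close>)
  qed
  obtain yy ee kk where QQ: "\<forall>n. Q n (yy n) (ee n) (kk n)" using exQ by metis
  have llpos: "ll n > 0" for n using PP unfolding P_def by blast
  have lllim: "ll \<longlonglongrightarrow> 0"
  proof (rule tendsto_sandwich[of "\<lambda>n. 0" _ _ "\<lambda>n. closed_horo_length G (\<xi> n) (r n) + inverse (real (Suc n))"])
    show "\<forall>\<^sub>F n in sequentially. 0 \<le> ll n" using llpos by (simp add: less_imp_le)
    show "\<forall>\<^sub>F n in sequentially. ll n \<le> closed_horo_length G (\<xi> n) (r n) + inverse (real (Suc n))"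
      using PP unfolding P_def by (simp add: less_imp_le)
    show "(\<lambda>n. 0) \<longlonglongrightarrow> (0::real)" by simp
    show "(\<lambda>n. closed_horo_length G (\<xi> n) (r n) + inverse (real (Suc n))) \<longlonglongrightarrow> 0"
      using tendsto_add[OF CL LIMSEQ_inverse_real_of_nat] by simp
  qed
  have yylim: "filterlim (\<lambda>n. \<bar>yy n\<bar>) at_top sequentially"
  proof -
    have g: "det (gmat u) = 1" using gmat_props[OF u] by simp
    obtain \<delta> where \<delta>: "\<delta> > 0" "\<forall>p y e k. p \<in> G \<longrightarrow> (e = 1 \<or> e = -1) \<longrightarrow> k \<noteq> 0 \<longrightarrow> inv2 (gmat u) ** p ** gmat u = mkq e k y
      \<longrightarrow> \<bar>k\<bar> * (1 + \<bar>y\<bar>)\<^sup>2 \<ge> \<delta>" using far_away[OF f g] by blast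
    show ?thesis unfolding filterlim_at_top
    proof
      fix Z :: real
      define R where "R = max Z 0"
      have R: "R \<ge> 0" "Z \<le> R" unfolding R_def by auto
      have "(\<lambda>n. ll n * (1 + R)\<^sup>2) \<longlonglongrightarrow> 0 * (1 + R)\<^sup>2" by (intro tendsto_intros lllim)
      hence "eventually (\<lambda>n. ll n * (1 + R)\<^sup>2 < \<delta>) sequentially" using \<delta>(1) by (intro order_tendstoD(2)) auto
      thus "eventually (\<lambda>n. Z \<le> \<bar>yy n\<bar>) sequentially"
      proof (rule eventually_mono)
        fix n assume n: "ll n * (1 + R)\<^sup>2 < \<delta>"
        show "Z \<le> \<bar>yy n\<bar>"
        proof (rule ccontr)
          assume "\<not> Z \<le> \<bar>yy n\<bar>"
          hence yR: "\<bar>yy n\<bar> \<le> R" using R by simp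
          have q: "Q n (yy n) (ee n) (kk n)" using QQ by blast
          have pG: "pp n \<in> G" using PP unfolding P_def by blast
          have "\<delta> \<le> \<bar>kk n\<bar> * (1 + \<bar>yy n\<bar>)\<^sup>2" using \<delta>(2) pG q unfolding Q_def by blast
          also have "\<dots> \<le> ll n * (1 + R)\<^sup>2"
            using q yR unfolding Q_def by (intro mult_mono power_mono) auto
          finally show False using n by simp
        qed
      qed
    qed
  qed
  show ?thesis
    apply (rule exI[of _ \<xi>], rule exI[of _ pp], rule exI[of _ ll], rule exI[of _ yy], rule exI[of _ ee], rule exI[of _ kk])
    using PP QQ lllim yylim unfolding P_def Q_def by blast
qed

theorem mainTheorem5:
  fixes G :: "mat2 set" and u :: "complex \<times> complex"
  assumes "fuchsian G" and "torsion_free G"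
    and "\<exists>p\<in>G. parabolic p"
    and "u \<in> T1H"
    and "cusp_recurrent G u"
  shows "\<exists>(H :: nat \<Rightarrow> real \<Rightarrow> complex) (p :: nat \<Rightarrow> mat2) (x :: nat \<Rightarrow> bdpt)
           (r :: nat \<Rightarrow> real) (l :: nat \<Rightarrow> real) (t :: nat \<Rightarrow> real).
     (\<forall>n. p n \<in> G \<and> parabolic (p n) \<and> bd_act (p n) (x n) = x n \<and>
          r n > 0 \<and> arclen_param (H n) (horocycle (x n) (r n)) \<and>
          l n > 0 \<and> (\<forall>s. mob (p n) (H n s) = H n (s + l n)) \<and>
          t n \<ge> 0 \<and>
          (\<exists>s0. geod u (t n) = H n s0 \<and>
                (\<exists>v. (geod u has_vector_derivative v) (at (t n)) \<and>
                     (H n has_vector_derivative v) (at s0)))) \<and>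
     incseq t \<and> filterlim t at_top sequentially \<and>
     inj x \<and>
     (\<exists>g :: mat2. det g = 1 \<and> bd_act g (fwd_end u) = None \<and>
        (\<forall>n. bd_act g (x n) \<noteq> None) \<and>
        (let y = (\<lambda>n. the (bd_act g (x n))) in
           (mono y \<or> antimono y) \<and> filterlim (\<lambda>n. \<bar>y n\<bar>) at_top sequentially)) \<and>
     (\<forall>m n. m \<noteq> n \<longrightarrow> horoball (x m) (r m) \<inter> horoball (x n) (r n) = {}) \<and>
     l \<longlonglongrightarrow> 0"
proof -
  note f = assms(1) and u = assms(4)
  define g where "g = gmat u"
  define gi where "gi = inv2 g"
  have dg: "det g = 1" unfolding g_def using gmat_props[OF u] by simp
  have dgi: "det gi = 1" unfolding gi_def using dg by simp
  obtain \<xi> pp ll yy ee kk where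
    D: "\<forall>n. pp n \<in> G \<and> parabolic (pp n) \<and> bd_act (pp n) (\<xi> n) = \<xi> n \<and> ll n > 0 \<and>
     bd_act gi (\<xi> n) = Some (yy n) \<and> (ee n = 1 \<or> ee n = -1) \<and> kk n \<noteq> 0 \<and>
     inv2 g ** pp n ** g = mkq (ee n) (kk n) (yy n) \<and> \<bar>kk n\<bar> \<le> ll n \<and> 2*\<bar>yy n\<bar>*\<bar>kk n\<bar> \<le> ll n"
    and lllim: "ll \<longlonglongrightarrow> 0" and yylim: "filterlim (\<lambda>n. \<bar>yy n\<bar>) at_top sequentially"
    using main_data[OF f u assms(5)] unfolding g_def gi_def by blast
  have ev1: "eventually (\<lambda>n. 1 \<le> \<bar>yy n\<bar>) sequentially" using yylim unfolding filterlim_at_top by blast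
  have "eventually (\<lambda>n. ll n < 1) sequentially" using order_tendstoD(2)[OF lllim, of 1] by simp
  hence ev2: "eventually (\<lambda>n. ll n \<le> 1) sequentially" by (rule eventually_mono) simp
  obtain N0 where N0: "\<And>n. n \<ge> N0 \<Longrightarrow> 1 \<le> \<bar>yy n\<bar> \<and> ll n \<le> 1"
    using eventually_conj[OF ev1 ev2] unfolding eventually_sequentially by blast
  have exbig: "\<exists>m > a. \<bar>yy m\<bar> > b" for a :: nat and b :: real
  proof -
    have "eventually (\<lambda>n. b + 1 \<le> \<bar>yy n\<bar>) sequentially" using yylim unfolding filterlim_at_top by blast
    then obtain M where M: "\<And>n. n \<ge> M \<Longrightarrow> b + 1 \<le> \<bar>yy n\<bar>" unfolding eventually_sequentially by blast
    have "b + 1 \<le> \<bar>yy (Suc (max a M))\<bar>" by (rule M) simp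
    hence "Suc (max a M) > a \<and> \<bar>yy (Suc (max a M))\<bar> > b" by simp
    thus ?thesis by blast
  qed
  define \<sigma> where "\<sigma> = rec_nat N0 (\<lambda>k s. SOME m. m > s \<and> \<bar>yy m\<bar> > \<bar>yy s\<bar>)"
  have \<sigma>0: "\<sigma> 0 = N0" unfolding \<sigma>_def by simp
  have \<sigma>S: "\<sigma> (Suc k) > \<sigma> k \<and> \<bar>yy (\<sigma> (Suc k))\<bar> > \<bar>yy (\<sigma> k)\<bar>" for k
  proof -
    have "\<sigma> (Suc k) = (SOME m. m > \<sigma> k \<and> \<bar>yy m\<bar> > \<bar>yy (\<sigma> k)\<bar>)" unfolding \<sigma>_def by simp
    thus ?thesis using someI_ex[OF exbig[of "\<sigma> k" "\<bar>yy (\<sigma> k)\<bar>"]] by simp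
  qed
  have sm\<sigma>: "strict_mono \<sigma>" unfolding strict_mono_Suc_iff using \<sigma>S by blast
  have smy\<sigma>: "strict_mono (\<lambda>k. \<bar>yy (\<sigma> k)\<bar>)" unfolding strict_mono_Suc_iff using \<sigma>S by blast
  have \<sigma>N: "\<sigma> k \<ge> N0" for k using strict_mono_less_eq[OF sm\<sigma>, of 0 k] \<sigma>0 by simp
  obtain \<phi> where \<phi>: "strict_mono \<phi>" "monoseq (\<lambda>k. yy (\<sigma> (\<phi> k)))" using seq_monosub[of "\<lambda>k. yy (\<sigma> k)"] by blast
  define \<tau> where "\<tau> = \<sigma> \<circ> \<phi>"
  have sm\<tau>: "strict_mono \<tau>" unfolding \<tau>_def using strict_mono_o[OF sm\<sigma> \<phi>(1)] .
  define Y where "Y k = yy (\<tau> k)" for k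
  have smY: "strict_mono (\<lambda>k. \<bar>Y k\<bar>)" unfolding Y_def \<tau>_def using strict_mono_o[OF smy\<sigma> \<phi>(1)] by (simp add: comp_def)
  have monY: "monoseq Y" unfolding Y_def \<tau>_def using \<phi>(2) by (simp add: comp_def)
  have \<tau>N: "\<tau> k \<ge> N0" for k unfolding \<tau>_def using \<sigma>N by simp
  have Y1: "\<bar>Y k\<bar> \<ge> 1" for k unfolding Y_def using N0[OF \<tau>N] by blast
  have ll1: "ll (\<tau> k) \<le> 1" for k using N0[OF \<tau>N] by blast
  define R where "R k H p' r' \<longleftrightarrow> p' \<in> G \<and> parabolic p' \<and> bd_act p' (\<xi> (\<tau> k)) = \<xi> (\<tau> k) \<and> r' > 0 \<and>
     arclen_param H (horocycle (\<xi> (\<tau> k)) r') \<and>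
     (\<forall>s. mob p' (H s) = H (s + 2*\<bar>Y k\<bar>*\<bar>kk (\<tau> k)\<bar>)) \<and> geod u (ln \<bar>Y k\<bar>) = H 0 \<and>
     (\<exists>v. (geod u has_vector_derivative v) (at (ln \<bar>Y k\<bar>)) \<and> (H has_vector_derivative v) (at 0)) \<and>
     (\<forall>z. z \<in> horoball (\<xi> (\<tau> k)) r' \<longrightarrow> mob gi z \<in> horoball (Some (Y k)) \<bar>Y k\<bar>)" for k H p' r'
  have exR: "\<exists>H p' r'. R k H p' r'" for k
  proof -
    have Dk: "pp (\<tau> k) \<in> G \<and> parabolic (pp (\<tau> k)) \<and> bd_act (pp (\<tau> k)) (\<xi> (\<tau> k)) = \<xi> (\<tau> k) \<and>
     bd_act gi (\<xi> (\<tau> k)) = Some (yy (\<tau> k)) \<and> (ee (\<tau> k) = 1 \<or> ee (\<tau> k) = -1) \<and> kk (\<tau> k) \<noteq> 0 \<and>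
     inv2 g ** pp (\<tau> k) ** g = mkq (ee (\<tau> k)) (kk (\<tau> k)) (yy (\<tau> k))" using D by blast
    show ?thesis unfolding R_def Y_def gi_def g_def
      by (rule tangent_output[OF f u, where p="pp (\<tau> k)" and \<xi>="\<xi> (\<tau> k)" and y="yy (\<tau> k)" and e="ee (\<tau> k)" and k="kk (\<tau> k)"])
        (use Dk Y1[of k] in \<open>auto simp: Y_def gi_def g_def\<close>)
  qed
  obtain HF PF RF where RR: "\<forall>k. R k (HF k) (PF k) (RF k)" using exR by metis
  define L where "L k = 2*\<bar>Y k\<bar>*\<bar>kk (\<tau> k)\<bar>" for k
  define T where "T k = ln \<bar>Y k\<bar>" for k
  define X where "X k = \<xi> (\<tau> k)" for k
  show ?thesis
  proof (rule exI[of _ HF], rule exI[of _ PF], rule exI[of _ X], rule exI[of _ RF], rule exI[of _ L], rule exI[of _ T], intro conjI)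
    show "\<forall>n. PF n \<in> G \<and> parabolic (PF n) \<and> bd_act (PF n) (X n) = X n \<and>
          RF n > 0 \<and> arclen_param (HF n) (horocycle (X n) (RF n)) \<and>
          L n > 0 \<and> (\<forall>s. mob (PF n) (HF n s) = HF n (s + L n)) \<and>
          T n \<ge> 0 \<and>
          (\<exists>s0. geod u (T n) = HF n s0 \<and>
                (\<exists>v. (geod u has_vector_derivative v) (at (T n)) \<and>
                     (HF n has_vector_derivative v) (at s0)))"
    proof
      fix n
      have Rn: "R n (HF n) (PF n) (RF n)" using RR by blast
      have Lp: "L n > 0" unfolding L_def using Y1[of n] D by auto
      have Tp: "T n \<ge> 0" unfolding T_def using Y1[of n] by simp
      show "PF n \<in> G \<and> parabolic (PF n) \<and> bd_act (PF n) (X n) = X n \<and>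
          RF n > 0 \<and> arclen_param (HF n) (horocycle (X n) (RF n)) \<and>
          L n > 0 \<and> (\<forall>s. mob (PF n) (HF n s) = HF n (s + L n)) \<and>
          T n \<ge> 0 \<and>
          (\<exists>s0. geod u (T n) = HF n s0 \<and>
                (\<exists>v. (geod u has_vector_derivative v) (at (T n)) \<and>
                     (HF n has_vector_derivative v) (at s0)))"
        using Rn Lp Tp unfolding R_def X_def L_def T_def by blast
    qed
    show "incseq T" unfolding incseq_def T_def
    proof (intro allI impI)
      fix m n :: nat assume "m \<le> n"
      hence "\<bar>Y m\<bar> \<le> \<bar>Y n\<bar>" using strict_mono_less_eq[OF smY] by blast
      thus "ln \<bar>Y m\<bar> \<le> ln \<bar>Y n\<bar>" using Y1[of m] by simp
    qed
    have Ylim: "filterlim (\<lambda>k. \<bar>Y k\<bar>) at_top sequentially"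
      unfolding Y_def using filterlim_compose[OF yylim filterlim_subseq[OF sm\<tau>]] by (simp add: comp_def)
    show "filterlim T at_top sequentially" unfolding T_def[abs_def]
      using filterlim_compose[OF ln_at_top Ylim] by (simp add: comp_def)
    have gX: "bd_act gi (X k) = Some (Y k)" for k unfolding X_def Y_def using D by blast
    show "inj X"
    proof (rule injI)
      fix a b assume "X a = X b"
      hence "Some (Y a) = Some (Y b)" using gX by metis
      hence "\<bar>Y a\<bar> = \<bar>Y b\<bar>" by simp
      thus "a = b" using strict_mono_eq[OF smY] by blast
    qed
    show "\<exists>g :: mat2. det g = 1 \<and> bd_act g (fwd_end u) = None \<and>
        (\<forall>n. bd_act g (X n) \<noteq> None) \<and>
        (let y = (\<lambda>n. the (bd_act g (X n))) in
           (mono y \<or> antimono y) \<and> filterlim (\<lambda>n. \<bar>y n\<bar>) at_top sequentially)"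
    proof (intro exI[of _ gi] conjI)
      show "det gi = 1" by (rule dgi)
      show "bd_act gi (fwd_end u) = None" unfolding fwd_end_eq[OF u] gi_def g_def using bd_act_inv_l[OF dg[unfolded g_def]] by simp
      show "\<forall>n. bd_act gi (X n) \<noteq> None" using gX by simp
      have yY: "(\<lambda>n. the (bd_act gi (X n))) = Y" using gX by auto
      show "let y = (\<lambda>n. the (bd_act gi (X n))) in (mono y \<or> antimono y) \<and> filterlim (\<lambda>n. \<bar>y n\<bar>) at_top sequentially"
        unfolding yY Let_def using monY Ylim unfolding monoseq_def mono_def antimono_def by blast
    qed
    show "\<forall>m n. m \<noteq> n \<longrightarrow> horoball (X m) (RF m) \<inter> horoball (X n) (RF n) = {}"
    proof (intro allI impI)
      fix m n :: nat assume mn: "m \<noteq> n"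
      have Rm: "R m (HF m) (PF m) (RF m)" and Rn: "R n (HF n) (PF n) (RF n)" using RR by blast+
      have Yne: "Y m \<noteq> Y n"
      proof
        assume "Y m = Y n" hence "\<bar>Y m\<bar> = \<bar>Y n\<bar>" by simp
        thus False using strict_mono_eq[OF smY] mn by blast
      qed
      have Dm: "pp (\<tau> m) \<in> G \<and> (ee (\<tau> m) = 1 \<or> ee (\<tau> m) = -1) \<and> kk (\<tau> m) \<noteq> 0 \<and>
          inv2 g ** pp (\<tau> m) ** g = mkq (ee (\<tau> m)) (kk (\<tau> m)) (Y m) \<and> 2*\<bar>Y m\<bar>*\<bar>kk (\<tau> m)\<bar> \<le> ll (\<tau> m)"
        using D unfolding Y_def by blast
      have Dn: "pp (\<tau> n) \<in> G \<and> (ee (\<tau> n) = 1 \<or> ee (\<tau> n) = -1) \<and> kk (\<tau> n) \<noteq> 0 \<and>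
          inv2 g ** pp (\<tau> n) ** g = mkq (ee (\<tau> n)) (kk (\<tau> n)) (Y n) \<and> 2*\<bar>Y n\<bar>*\<bar>kk (\<tau> n)\<bar> \<le> ll (\<tau> n)"
        using D unfolding Y_def by blast
      have disj: "horoball (Some (Y m)) \<bar>Y m\<bar> \<inter> horoball (Some (Y n)) \<bar>Y n\<bar> = {}"
        by (rule normalized_disjoint[OF f dg, of "pp (\<tau> m)" "pp (\<tau> n)" "ee (\<tau> m)" "ee (\<tau> n)" "kk (\<tau> m)" "kk (\<tau> n)" "Y m" "Y n"])
          (use Dm Dn Yne ll1[of m] ll1[of n] in auto)
      show "horoball (X m) (RF m) \<inter> horoball (X n) (RF n) = {}"
      proof (rule ccontr)
        assume "horoball (X m) (RF m) \<inter> horoball (X n) (RF n) \<noteq> {}"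
        then obtain z where z: "z \<in> horoball (X m) (RF m)" "z \<in> horoball (X n) (RF n)" by blast
        have "mob gi z \<in> horoball (Some (Y m)) \<bar>Y m\<bar>" using Rm z(1) unfolding R_def X_def by blast
        moreover have "mob gi z \<in> horoball (Some (Y n)) \<bar>Y n\<bar>" using Rn z(2) unfolding R_def X_def by blast
        ultimately show False using disj by blast
      qed
    qed
    show "L \<longlonglongrightarrow> 0"
    proof (rule tendsto_sandwich[of "\<lambda>n. 0" _ _ "\<lambda>k. ll (\<tau> k)"])
      show "\<forall>\<^sub>F n in sequentially. 0 \<le> L n" unfolding L_def by simp
      show "\<forall>\<^sub>F n in sequentially. L n \<le> ll (\<tau> n)" unfolding L_def Y_def using D by simp
      show "(\<lambda>n. 0) \<longlonglongrightarrow> (0::real)" by simp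
      show "(\<lambda>k. ll (\<tau> k)) \<longlonglongrightarrow> 0" using LIMSEQ_subseq_LIMSEQ[OF lllim sm\<tau>] by (simp add: comp_def)
    qed
  qed
qed

end
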